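(* Let $f:\mathbb{R}^n\to\mathbb{R}$ be convex, continuously differentiable and locally strongly convex with locally Lipschitz gradient, with $\mathcal{X}^*:=\arg\min f\neq\emptyset$ and optimal value $f^*$. Fix $x^0$, $\alpha_0>0$, $\theta_0>0$, $\tau>1$, $0<\omega\le\frac1{\sqrt2}$, $\gamma_k\in[\gamma_{\min},\gamma_{\max}]\subset(0,\infty)$, and generate $x^{k+1}=x^k-\alpha_k\gamma_k\nabla f(x^k)$ with, for $k\ge1$, $L_k:=\frac{\|\nabla f(x^k)-\nabla f(x^{k-1})\|}{\|x^k-x^{k-1}\|}$, $\alpha_k:=\min\{\frac{\alpha_{k-1}\gamma_{k-1}}{\gamma_k}\sqrt{2(1-\omega^2)+\theta_{k-1}/\tau},\frac{\omega}{\gamma_kL_k}\}$, $\theta_k:=\frac{\alpha_k\gamma_k}{\alpha_{k-1}\gamma_{k-1}}$. Let $\eta:=\mathrm{dist}^2(x^0;\mathcal{X}^* )+2\alpha_0^2\gamma_0^2\|\nabla f(x^0)\|^2+2\alpha_0\gamma_0\theta_0(f(x^0)-f^* )$, $W:=\overline B(0;R)$ with $R>3\sqrt\eta+\mathrm{dist}(x^0;\mathcal{X}^* )+\|x^0\|$, $L_W>0$ a Lipschitz constant of $\nabla f$ on $W$, $\mu_W:=\inf_{x,y\in W,x\neq y}\frac{\langle\nabla f(y)-\nabla f(x),y-x\rangle}{\|y-x\|^2}$, $m:=\min\{\frac{\alpha_0\gamma_0\mu_W}{\omega},\frac{\mu_W}{L_W}\}$ and $\hat q:=\min\{\frac{\mu_W}{2}\min\{\alpha_0\gamma_0,\frac{\omega}{L_W}\},\frac{\mu_W(1-\omega^2)}{2\omega^3L_W+\mu_W(1-\omega^2)},\frac{(\tau-1)m}{\tau(2(1-\omega^2)+m)}\}$.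 Let $x^*\in\mathcal{X}^*$, $$\tilde c_1:=\sqrt{(R+\|x^0\|)^2+\eta},\quad\tilde c_2:=\frac{\omega L_W^2\tilde c_1^2}{\mu_W\min\{\alpha_0^2\gamma_0^2L_W^2,\omega^2\}},\quad \tilde c_3:=\frac{\sqrt{2\tilde c_1^2(1-\omega^2)\omega L_W^3}}{\sqrt{2\omega^2L_W+(1-\omega^2)\mu_W}\,\min\{\alpha_0\gamma_0L_W,\omega\}}.$$ Then for all $k\in\mathbb{N}_0$: $\|x^{k+1}-x^*\|\le\tilde c_1(\sqrt{1-\hat q})^k$, $f(x^k)-f^*\le\tilde c_2(1-\hat q)^k$, and $\|\nabla f(x^k)\|\le\tilde c_3(\sqrt{1-\hat q})^k$.
   Context: AdaSGA setting. $f$ is locally strongly convex if every $x$ has $\delta_x>0$, $\mu_x>0$ with $f(y)\ge f(z)+\langle\nabla f(z),y-z\rangle+\frac{\mu_x}{2}\|y-z\|^2$ for all $y,z\in B(x;\delta_x)$. *)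

theory Defs
  imports "HOL-Analysis.Analysis"
begin

text \<open>The gradient of f is given by a function g (GDERIV f x :> g x for all x).\<close>
definition locally_strongly_convex :: "('a::real_inner \<Rightarrow> real) \<Rightarrow> ('a \<Rightarrow> 'a) \<Rightarrow> bool" where
  "locally_strongly_convex f g \<longleftrightarrow>
     (\<forall>x. \<exists>\<delta>>0. \<exists>\<mu>>0. \<forall>y\<in>ball x \<delta>. \<forall>z\<in>ball x \<delta>.
        f y \<ge> f z + inner (g z) (y - z) + \<mu> / 2 * (norm (y - z))\<^sup>2)"

definition locally_lipschitz :: "('a::metric_space \<Rightarrow> 'b::metric_space) \<Rightarrow> bool" where
  "locally_lipschitz g \<longleftrightarrow>
     (\<forall>x. \<exists>\<delta>>0. \<exists>L. \<forall>y\<in>ball x \<delta>. \<forall>z\<in>ball x \<delta>. dist (g y) (g z) \<le> L * dist y z)"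

end

theory Submission
  imports Defs
begin


lemma grad_ineq:
  fixes \<phi> :: "'a::real_inner \<Rightarrow> real" and G :: "'a \<Rightarrow> 'a"
  assumes der: "\<And>z. GDERIV \<phi> z :> G z" and S: "convex S"
    and mono: "\<And>a b. a \<in> S \<Longrightarrow> b \<in> S \<Longrightarrow> inner (G a - G b) (a - b) \<ge> \<kappa> * (norm (a - b))\<^sup>2"
    and y: "y \<in> S" and z: "z \<in> S"
  shows "\<phi> y \<ge> \<phi> z + inner (G z) (y - z) + \<kappa> / 2 * (norm (y - z))\<^sup>2"
proof -
  define d where "d = y - z"
  define \<psi> where "\<psi> t = \<phi> (z + t *\<^sub>R d) - \<kappa> / 2 * t\<^sup>2 * (norm d)\<^sup>2" for t
  define \<psi>' where "\<psi>' t = inner d (G (z + t *\<^sub>R d)) - \<kappa> * t * (norm d)\<^sup>2" for t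
  have D: "DERIV \<psi> t :> \<psi>' t" for t
  proof -
    have l: "((\<lambda>t. z + t *\<^sub>R d) has_derivative (\<lambda>h. h *\<^sub>R d)) (at t)"
      by (auto intro!: derivative_eq_intros)
    have "((\<lambda>t. \<phi> (z + t *\<^sub>R d)) has_derivative (\<lambda>h. inner (h *\<^sub>R d) (G (z + t *\<^sub>R d)))) (at t)"
      using has_derivative_compose[OF l der[unfolded gderiv_def]] by simp
    then have "((\<lambda>t. \<phi> (z + t *\<^sub>R d)) has_real_derivative (inner d (G (z + t *\<^sub>R d)))) (at t)"
      unfolding has_field_derivative_def by (simp add: mult.commute[of _ "inner d _"])
    moreover have "((\<lambda>t. \<kappa> / 2 * t\<^sup>2 * (norm d)\<^sup>2) has_real_derivative (\<kappa> * t * (norm d)\<^sup>2)) (at t)"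
      by (auto intro!: derivative_eq_intros)
    ultimately show ?thesis unfolding \<psi>_def \<psi>'_def
      by (intro derivative_eq_intros) auto
  qed
  obtain \<xi> where \<xi>: "0 < \<xi>" "\<xi> < 1" "\<psi> 1 - \<psi> 0 = (1 - 0) * \<psi>' \<xi>"
    using MVT2[of 0 1 \<psi> \<psi>'] D by auto
  define p where "p = z + \<xi> *\<^sub>R d"
  have pS: "p \<in> S"
  proof -
    have "p = (1 - \<xi>) *\<^sub>R z + \<xi> *\<^sub>R y" unfolding p_def d_def by (simp add: algebra_simps)
    then show ?thesis using convexD[OF S z y] \<xi> by auto
  qed
  have "inner (G p - G z) (p - z) \<ge> \<kappa> * (norm (p - z))\<^sup>2" using mono[OF pS z] .
  then have "\<xi> * inner (G p - G z) d \<ge> \<xi> * (\<kappa> * \<xi> * (norm d)\<^sup>2)"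
    unfolding p_def by (simp add: power2_eq_square algebra_simps)
  then have "inner (G p - G z) d \<ge> \<kappa> * \<xi> * (norm d)\<^sup>2"
    using \<xi>(1) by (simp add: mult_le_cancel_left_pos)
  then have "\<psi>' \<xi> \<ge> \<psi>' 0"
    unfolding \<psi>'_def p_def by (simp add: inner_diff_left inner_diff_right inner_commute)
  then have "\<psi> 1 - \<psi> 0 \<ge> \<psi>' 0" using \<xi> by simp
  then show ?thesis unfolding \<psi>_def \<psi>'_def d_def by (simp add: inner_commute)
qed




lemma lsc_mono:
  fixes f :: "'a::euclidean_space \<Rightarrow> real"
  assumes lsc: "locally_strongly_convex f g" and K: "compact K" "convex K"
  shows "\<exists>\<mu>>0. \<forall>u\<in>K. \<forall>v\<in>K. inner (g v - g u) (v - u) \<ge> \<mu> * (norm (v - u))\<^sup>2"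
proof -
  have "\<forall>x. \<exists>d. \<exists>mu. 0 < d \<and> 0 < mu \<and> (\<forall>y\<in>ball x d. \<forall>z\<in>ball x d. f y \<ge> f z + inner (g z) (y - z) + mu / 2 * (norm (y - z))\<^sup>2)"
    using lsc unfolding locally_strongly_convex_def by blast
  then obtain \<delta> \<mu> where dm: "\<And>x. 0 < \<delta> x" "\<And>x. 0 < \<mu> x"
    "\<And>x y z. y \<in> ball x (\<delta> x) \<Longrightarrow> z \<in> ball x (\<delta> x) \<Longrightarrow> f y \<ge> f z + inner (g z) (y - z) + \<mu> x / 2 * (norm (y - z))\<^sup>2"
    by metis
  have loc: "inner (g y - g z) (y - z) \<ge> \<mu> x * (norm (y - z))\<^sup>2"
    if "y \<in> ball x (\<delta> x)" "z \<in> ball x (\<delta> x)" for x y z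
  proof -
    have 1: "f y \<ge> f z + inner (g z) (y - z) + \<mu> x / 2 * (norm (y - z))\<^sup>2" using dm(3) that by blast
    have 2: "f z \<ge> f y + inner (g y) (z - y) + \<mu> x / 2 * (norm (z - y))\<^sup>2" using dm(3) that by blast
    have "norm (z - y) = norm (y - z)" by (simp add: norm_minus_commute)
    moreover have "inner (g y) (z - y) = - inner (g y) (y - z)" by (simp add: inner_diff_right)
    ultimately show ?thesis using 1 2 by (simp add: inner_diff_left)
  qed
  show ?thesis
  proof (cases "K = {}")
    case True then show ?thesis by (intro exI[of _ 1]) auto
  next
    case False
    have "K \<subseteq> (\<Union>c\<in>K. ball c (\<delta> c))" using dm(1) by auto
    then obtain C where C: "C \<subseteq> K" "finite C" "K \<subseteq> (\<Union>c\<in>C. ball c (\<delta> c))"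
      using compactE_image[OF K(1), of K "\<lambda>c. ball c (\<delta> c)"] by auto
    have Cne: "C \<noteq> {}" using C False by auto
    obtain \<epsilon> where \<epsilon>: "0 < \<epsilon>" "\<And>x. x \<in> K \<Longrightarrow> \<exists>G \<in> (\<lambda>c. ball c (\<delta> c)) ` C. ball x \<epsilon> \<subseteq> G"
      using Heine_Borel_lemma[OF K(1), of "(\<lambda>c. ball c (\<delta> c)) ` C"] C(3) by auto
    define m where "m = Min (\<mu> ` C)"
    have m_pos: "m > 0" unfolding m_def using C(2) Cne dm(2) by (subst Min_gr_iff) auto
    have m_le: "m \<le> \<mu> c" if "c \<in> C" for c unfolding m_def using C(2) that by auto
    have close: "inner (g q - g p) (q - p) \<ge> m * (norm (q - p))\<^sup>2"
      if p: "p \<in> K" and pq: "norm (q - p) < \<epsilon>" for p q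
    proof -
      obtain c where c: "c \<in> C" "ball p \<epsilon> \<subseteq> ball c (\<delta> c)" using \<epsilon>(2)[OF p] by auto
      have "p \<in> ball p \<epsilon>" "q \<in> ball p \<epsilon>" using \<epsilon>(1) pq by (auto simp: dist_norm norm_minus_commute)
      then have "p \<in> ball c (\<delta> c)" "q \<in> ball c (\<delta> c)" using c(2) by (meson subsetD)+
      then have "inner (g q - g p) (q - p) \<ge> \<mu> c * (norm (q - p))\<^sup>2" using loc by blast
      moreover have "m * (norm (q - p))\<^sup>2 \<le> \<mu> c * (norm (q - p))\<^sup>2"
        using m_le[OF c(1)] by (simp add: mult_right_mono)
      ultimately show ?thesis by linarith
    qed
    have "inner (g v - g u) (v - u) \<ge> m * (norm (v - u))\<^sup>2" if u: "u \<in> K" and v: "v \<in> K" for u v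
    proof -
      obtain N :: nat where N: "norm (v - u) < real N * \<epsilon>"
        using reals_Archimedean3[OF \<epsilon>(1)] by blast
      have Npos: "N > 0" proof (rule ccontr)
        assume "\<not> N > 0" then have "N = 0" by simp
        then show False using N norm_ge_zero[of "v - u"] by simp
      qed
      define p where "p i = u + (real i / real N) *\<^sub>R (v - u)" for i
      have pK: "p i \<in> K" if "i \<le> N" for i
      proof -
        have "p i = (1 - real i / real N) *\<^sub>R u + (real i / real N) *\<^sub>R v"
          unfolding p_def by (simp add: algebra_simps)
        moreover have "0 \<le> real i / real N" "real i / real N \<le> 1" using that Npos by auto
        ultimately show ?thesis using convexD[OF K(2) u v] by auto
      qed
      have step: "p (Suc i) - p i = (1 / real N) *\<^sub>R (v - u)" for i
      proof -
        have "p (Suc i) - p i = ((real (Suc i) / real N) - (real i / real N)) *\<^sub>R (v - u)"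
          unfolding p_def by (simp add: scaleR_diff_left)
        also have "(real (Suc i) / real N) - (real i / real N) = 1 / real N"
          by (simp add: diff_divide_distrib[symmetric])
        finally show ?thesis .
      qed
      have each: "inner (g (p (Suc i)) - g (p i)) (v - u) \<ge> m * (norm (v - u))\<^sup>2 / real N" if "i < N" for i
      proof -
        have nrm: "norm (p (Suc i) - p i) = norm (v - u) / real N" using step by simp
        have "norm (p (Suc i) - p i) < \<epsilon>" unfolding nrm using N Npos by (simp add: divide_less_eq mult.commute)
        then have "inner (g (p (Suc i)) - g (p i)) (p (Suc i) - p i) \<ge> m * (norm (p (Suc i) - p i))\<^sup>2"
          using close pK that by simp
        then have "(1 / real N) * inner (g (p (Suc i)) - g (p i)) (v - u) \<ge> (1 / real N) * (m * (norm (v - u))\<^sup>2 / real N)"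
          unfolding step nrm by (simp add: power_divide power2_eq_square)
        then have h: "m * (norm (v - u))\<^sup>2 / (real N * real N) \<le> inner (g (p (Suc i)) - g (p i)) (v - u) / real N"
          by simp
        have NN: "real N > 0" using Npos by simp
        have "m * (norm (v - u))\<^sup>2 / real N = real N * (m * (norm (v - u))\<^sup>2 / (real N * real N))"
          using NN by (simp add: field_simps)
        also have "\<dots> \<le> real N * (inner (g (p (Suc i)) - g (p i)) (v - u) / real N)"
          by (rule mult_left_mono[OF h]) (use NN in simp)
        also have "\<dots> = inner (g (p (Suc i)) - g (p i)) (v - u)" using NN by simp
        finally show ?thesis .
      qed
      have "inner (g v - g u) (v - u) = inner (\<Sum>i<N. g (p (Suc i)) - g (p i)) (v - u)"
        using Npos by (subst sum_lessThan_telescope) (simp add: p_def)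
      also have "\<dots> = (\<Sum>i<N. inner (g (p (Suc i)) - g (p i)) (v - u))" by (rule inner_sum_left)
      also have "\<dots> \<ge> (\<Sum>i<N. m * (norm (v - u))\<^sup>2 / real N)" by (rule sum_mono) (use each in auto)
      finally show ?thesis using Npos by simp
    qed
    then show ?thesis using m_pos by blast
  qed
qed




lemma div_le_div_cross:
  fixes a b c d :: real
  assumes "0 < b" "0 < d" "a * d \<le> c * b"
  shows "a / b \<le> c / d"
proof -
  have "a / b = (a * d) / (b * d)" using assms by simp
  also have "\<dots> \<le> (c * b) / (b * d)" using assms by (intro divide_right_mono) auto
  also have "\<dots> = c / d" using assms by simp
  finally show ?thesis .
qed

lemma lin_interp:
  fixes A B t T :: real
  assumes "A \<ge> 0" "A + B * T \<ge> 0" "0 \<le> t" "t \<le> T"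
  shows "A + B * t \<ge> 0"
proof (cases "B \<ge> 0")
  case True then show ?thesis using assms by (simp add: mult_nonneg_nonneg)
next
  case False
  then have "B * t \<ge> B * T" using assms by (intro mult_left_mono_neg) auto
  then show ?thesis using assms by linarith
qed

lemma contr_arith:
  fixes Dk X Y P t T q \<kappa> s th' \<tau> \<mu>l :: real
  assumes Dk: "Dk \<ge> 0" and q0: "0 \<le> q" and qmu: "q \<le> \<mu>l"
    and XY: "X \<ge> 0" "Y \<ge> 0" "X \<le> \<kappa> * Y" "\<kappa> \<ge> 0"
    and h3: "q * (2 + \<kappa>) \<le> 2"
    and h4: "q * (2 + s * th') \<le> s * th' * (1 - 1 / \<tau>)"
    and h5: "q \<le> P * T" and P: "P \<ge> 0"
    and t: "0 \<le> t" "t \<le> T" and sT: "s * T = 2 + s * th' / \<tau>" and sth: "s * th' \<ge> 0"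
  shows "(1 - \<mu>l) * Dk + (X - P * t * X) + s * t * Y \<le> (1 - q) * (Dk + X + (2 + s * th') * Y)"
proof -
  have "q * 2 \<le> q * (2 + \<kappa>)" using XY(4) q0 by (intro mult_left_mono) auto
  then have q1: "q \<le> 1" using h3 by linarith
  define A where "A = (2 + s * th') * Y - q * X - q * (2 + s * th') * Y"
  define B where "B = P * X - s * Y"
  have A0: "A \<ge> 0"
  proof -
    have "q * X \<le> q * (\<kappa> * Y)" using XY q0 by (intro mult_left_mono) auto
    moreover have "q * \<kappa> \<le> (2 + s * th') * (1 - q)"
    proof -
      have "s * th' * (1 - q) \<ge> 0" using q1 sth by simp
      then show ?thesis using h3 by (simp add: algebra_simps)
    qed
    then have "q * \<kappa> * Y \<le> (2 + s * th') * (1 - q) * Y" using XY by (intro mult_right_mono) auto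
    ultimately show ?thesis unfolding A_def by (simp add: algebra_simps)
  qed
  have AT: "A + B * T \<ge> 0"
  proof -
    have "q * X \<le> P * T * X" using h5 XY by (intro mult_right_mono) auto
    moreover have "q * (2 + s * th') * Y \<le> s * th' * (1 - 1 / \<tau>) * Y" using h4 XY by (intro mult_right_mono) auto
    moreover have "B * T = P * T * X - (s * T) * Y" unfolding B_def by (simp add: algebra_simps)
    then have "B * T = P * T * X - (2 + s * th' / \<tau>) * Y" unfolding sT .
    ultimately show ?thesis unfolding A_def by (simp add: algebra_simps)
  qed
  have "A + B * t \<ge> 0" by (rule lin_interp[OF A0 AT t])
  moreover have "(1 - \<mu>l) * Dk \<le> (1 - q) * Dk" using qmu Dk by (intro mult_right_mono) auto
  ultimately show ?thesis unfolding A_def B_def by (simp add: algebra_simps)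
qed


locale setting =
  fixes f :: "'a::euclidean_space \<Rightarrow> real" and g :: "'a \<Rightarrow> 'a"
    and x :: "nat \<Rightarrow> 'a" and \<alpha> \<gamma> \<theta> L :: "nat \<Rightarrow> real"
    and \<tau> \<omega> \<gamma>min \<gamma>max :: real
    and Xs :: "'a set" and fstar \<eta> R LW \<mu>W m qhat c1 c2 c3 :: real and xs :: 'a
  assumes conv: "convex_on UNIV f"
    and grad: "\<And>z. GDERIV f z :> g z"
    and grad_cont: "continuous_on UNIV g"
    and lsc: "locally_strongly_convex f g"
    and llip: "locally_lipschitz g"
    and Xs_def: "Xs = {z. \<forall>y. f z \<le> f y}"
    and Xs_ne: "Xs \<noteq> {}"
    and fstar_def: "fstar = (INF y. f y)"
    and \<alpha>0: "\<alpha> 0 > 0" and \<theta>0: "\<theta> 0 > 0" and \<tau>: "\<tau> > 1"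
    and \<omega>: "0 < \<omega>" "\<omega> \<le> 1 / sqrt 2"
    and \<gamma>bounds: "0 < \<gamma>min" "\<gamma>min \<le> \<gamma>max" "\<And>k. \<gamma> k \<in> {\<gamma>min..\<gamma>max}"
    and iter: "\<And>k. x (Suc k) = x k - (\<alpha> k * \<gamma> k) *\<^sub>R g (x k)"
    and L_def: "\<And>k. k \<ge> 1 \<Longrightarrow> L k = norm (g (x k) - g (x (k - 1))) / norm (x k - x (k - 1))"
    and \<alpha>_def: "\<And>k. k \<ge> 1 \<Longrightarrow> \<alpha> k =
        (if L k = 0
         then \<alpha> (k - 1) * \<gamma> (k - 1) / \<gamma> k * sqrt (2 * (1 - \<omega>\<^sup>2) + \<theta> (k - 1) / \<tau>)
         else min (\<alpha> (k - 1) * \<gamma> (k - 1) / \<gamma> k * sqrt (2 * (1 - \<omega>\<^sup>2) + \<theta> (k - 1) / \<tau>))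
                  (\<omega> / (\<gamma> k * L k)))"
    and \<theta>_def: "\<And>k. k \<ge> 1 \<Longrightarrow> \<theta> k = \<alpha> k * \<gamma> k / (\<alpha> (k - 1) * \<gamma> (k - 1))"
    and \<eta>_def: "\<eta> = (infdist (x 0) Xs)\<^sup>2 + 2 * (\<alpha> 0)\<^sup>2 * (\<gamma> 0)\<^sup>2 * (norm (g (x 0)))\<^sup>2
                   + 2 * \<alpha> 0 * \<gamma> 0 * \<theta> 0 * (f (x 0) - fstar)"
    and R: "R > 3 * sqrt \<eta> + infdist (x 0) Xs + norm (x 0)"
    and LW_pos: "LW > 0"
    and LW_lip: "\<forall>u\<in>cball 0 R. \<forall>v\<in>cball 0 R. norm (g u - g v) \<le> LW * norm (u - v)"
    and \<mu>W_def: "\<mu>W = Inf {inner (g v - g u) (v - u) / (norm (v - u))\<^sup>2 | u v.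
                        u \<in> cball 0 R \<and> v \<in> cball 0 R \<and> u \<noteq> v}"
    and m_def: "m = min (\<alpha> 0 * \<gamma> 0 * \<mu>W / \<omega>) (\<mu>W / LW)"
    and qhat_def: "qhat = min (\<mu>W / 2 * min (\<alpha> 0 * \<gamma> 0) (\<omega> / LW))
                     (min (\<mu>W * (1 - \<omega>\<^sup>2) / (2 * \<omega> ^ 3 * LW + \<mu>W * (1 - \<omega>\<^sup>2)))
                          ((\<tau> - 1) * m / (\<tau> * (2 * (1 - \<omega>\<^sup>2) + m))))"
    and xs: "xs \<in> Xs"
    and c1_def: "c1 = sqrt ((R + norm (x 0))\<^sup>2 + \<eta>)"
    and c2_def: "c2 = \<omega> * LW\<^sup>2 * c1\<^sup>2 / (\<mu>W * min ((\<alpha> 0)\<^sup>2 * (\<gamma> 0)\<^sup>2 * LW\<^sup>2) (\<omega>\<^sup>2))"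
    and c3_def: "c3 = sqrt (2 * c1\<^sup>2 * (1 - \<omega>\<^sup>2) * \<omega> * LW ^ 3)
                    / (sqrt (2 * \<omega>\<^sup>2 * LW + (1 - \<omega>\<^sup>2) * \<mu>W) * min (\<alpha> 0 * \<gamma> 0 * LW) \<omega>)"
begin

definition "lam k = \<alpha> k * \<gamma> k"
definition "W = cball (0::'a) R"
definition "D k = (norm (x k - xs))\<^sup>2"
definition "F k = f (x k) - fstar"
definition "lmin = min (lam 0) (\<omega> / LW)"
definition "cc = \<omega>\<^sup>2 / (1 - \<omega>\<^sup>2)"
definition "ss = 1 / (1 - \<omega>\<^sup>2)"
definition "sq k = sqrt (2 * (1 - \<omega>\<^sup>2) + \<theta> k / \<tau>)"

lemma om: "0 < \<omega>" "\<omega>\<^sup>2 \<le> 1/2" "\<omega> < 1" "\<omega>\<^sup>2 < 1"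
proof -
  show "0 < \<omega>" using \<omega> by simp
  have "\<omega>\<^sup>2 \<le> (1 / sqrt 2)\<^sup>2" using \<omega> by (intro power_mono) auto
  then show h: "\<omega>\<^sup>2 \<le> 1/2" by (simp add: power_divide)
  then show "\<omega>\<^sup>2 < 1" by simp
  then show "\<omega> < 1" using \<omega>(1) by (smt (verit) one_le_power)
qed

lemma cc_ss: "cc \<le> 1" "0 \<le> cc" "ss \<le> 2" "1 \<le> ss" "ss * \<omega>\<^sup>2 = cc" "cc = ss - 1" "ss * (1 - \<omega>\<^sup>2) = 1"
  using om unfolding cc_def ss_def by (auto simp: field_simps)

lemma sq_ge1: "sq k \<ge> 1" if "\<theta> k \<ge> 0"
proof -
  have "\<theta> k / \<tau> \<ge> 0" using that \<tau> by simp
  then have "2 * (1 - \<omega>\<^sup>2) + \<theta> k / \<tau> \<ge> 1" using om(2) by (simp add: algebra_simps)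
  then show ?thesis unfolding sq_def by simp
qed

lemma gam_pos: "\<gamma> k > 0" using \<gamma>bounds(1) \<gamma>bounds(3)[of k] by auto

lemma L_nonneg: "k \<ge> 1 \<Longrightarrow> L k \<ge> 0" using L_def by simp

lemma pos: "\<alpha> k > 0 \<and> \<theta> k > 0"
proof (induction k)
  case 0 then show ?case using \<alpha>0 \<theta>0 by simp
next
  case (Suc j)
  have s1: "sq j \<ge> 1" using Suc sq_ge1 by auto
  have g: "\<gamma> j > 0" "\<gamma> (Suc j) > 0" using gam_pos by auto
  have a1: "\<alpha> j * \<gamma> j / \<gamma> (Suc j) * sq j > 0" using Suc g s1 by simp
  have "\<alpha> (Suc j) > 0"
  proof (cases "L (Suc j) = 0")
    case True then show ?thesis using \<alpha>_def[of "Suc j"] a1 unfolding sq_def by simp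
  next
    case False
    then have "L (Suc j) > 0" using L_nonneg[of "Suc j"] by simp
    then have "\<omega> / (\<gamma> (Suc j) * L (Suc j)) > 0" using om g by simp
    then show ?thesis using \<alpha>_def[of "Suc j"] a1 False unfolding sq_def by simp
  qed
  moreover have "\<theta> (Suc j) > 0" using \<theta>_def[of "Suc j"] calculation Suc g by simp
  ultimately show ?case by simp
qed

lemma lam_pos: "lam k > 0" unfolding lam_def using pos gam_pos by simp
lemma th_pos: "\<theta> k > 0" using pos by simp

lemma lam_rec: "lam (Suc j) = (if L (Suc j) = 0 then lam j * sq j else min (lam j * sq j) (\<omega> / L (Suc j)))"
proof -
  have g: "\<gamma> (Suc j) > 0" using gam_pos by simp
  have e: "\<gamma> (Suc j) * min (a / \<gamma> (Suc j)) (b / \<gamma> (Suc j)) = min a b" for a b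
    using g by (simp add: min_def divide_le_cancel)
  show ?thesis
  proof (cases "L (Suc j) = 0")
    case True then show ?thesis
    using \<alpha>_def[of "Suc j"] g unfolding lam_def sq_def by simp
  next
    case False
    have "\<alpha> (Suc j) = min (lam j * sq j / \<gamma> (Suc j)) (\<omega> / L (Suc j) / \<gamma> (Suc j))"
      using \<alpha>_def[of "Suc j"] False unfolding lam_def sq_def by (simp add: mult.commute)
    then have "lam (Suc j) = \<gamma> (Suc j) * min (lam j * sq j / \<gamma> (Suc j)) (\<omega> / L (Suc j) / \<gamma> (Suc j))"
      unfolding lam_def by (simp only: mult.commute)
    also have "\<dots> = min (lam j * sq j) (\<omega> / L (Suc j))" by (rule e)
    finally show ?thesis using False by simp
  qed
qed

lemma th_rec: "\<theta> (Suc j) = lam (Suc j) / lam j"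
  using \<theta>_def[of "Suc j"] unfolding lam_def by simp

lemma lam_le_sq: "lam (Suc j) \<le> lam j * sq j" using lam_rec by (auto simp: min_def)

lemma lam_le_L: "L (Suc j) \<noteq> 0 \<Longrightarrow> lam (Suc j) \<le> \<omega> / L (Suc j)" using lam_rec by (auto simp: min_def)

lemma lam_ge: "lam (Suc j) \<ge> min (lam j) (\<omega> / L (Suc j))"
proof -
  have "lam j * sq j \<ge> lam j" using sq_ge1[of j] th_pos[of j] lam_pos[of j] by simp
  then show ?thesis using lam_rec[of j] by (auto simp: min_def)
qed

lemma th_sq: "(\<theta> (Suc j))\<^sup>2 \<le> 2 * (1 - \<omega>\<^sup>2) + \<theta> j / \<tau>"
proof -
  have "\<theta> (Suc j) \<le> sq j" using lam_le_sq[of j] lam_pos[of j] th_rec[of j] by (simp add: divide_le_eq mult.commute)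
  then have "(\<theta> (Suc j))\<^sup>2 \<le> (sq j)\<^sup>2" using th_pos by (intro power_mono) (auto simp: less_imp_le)
  also have "\<dots> = 2 * (1 - \<omega>\<^sup>2) + \<theta> j / \<tau>" unfolding sq_def using om th_pos[of j] \<tau> 
    by (subst real_sqrt_pow2) (auto intro!: add_nonneg_nonneg)
  finally show ?thesis .
qed

lemma lam_th: "lam (Suc j) = \<theta> (Suc j) * lam j"
  using th_rec[of j] lam_pos[of j] by simp

lemma xs_min: "f xs \<le> f y" using xs Xs_def by auto

lemma fstar_eq: "fstar = f xs"
  unfolding fstar_def by (rule cInf_eq_minimum) (auto simp: xs_min)

lemma F_nonneg: "F k \<ge> 0" unfolding F_def using xs_min fstar_eq by simp

lemma g_xs: "g xs = 0"
proof -
  have "(\<lambda>h. inner h (g xs)) = (\<lambda>h. 0)"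
    by (rule has_derivative_local_min[OF grad[unfolded gderiv_def]]) (auto simp: xs_min)
  then have "inner (g xs) (g xs) = 0" by metis
  then show ?thesis by simp
qed

lemma Xs_single: "Xs = {xs}"
proof (rule ccontr)
  assume "Xs \<noteq> {xs}"
  then obtain z where z: "z \<in> Xs" "z \<noteq> xs" using xs by blast
  have fz: "f z = f xs" using z(1) xs Xs_def by (auto intro: antisym)
  obtain \<delta> \<mu> where d: "\<delta> > 0" "\<mu> > 0"
    "\<And>y z. y \<in> ball xs \<delta> \<Longrightarrow> z \<in> ball xs \<delta> \<Longrightarrow> f y \<ge> f z + inner (g z) (y - z) + \<mu> / 2 * (norm (y - z))\<^sup>2"
    using lsc unfolding locally_strongly_convex_def by metis
  define n where "n = norm (z - xs)"
  have n: "n > 0" using z(2) unfolding n_def by simp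
  define t where "t = min (1/2) (\<delta> / (2 * n))"
  have t: "0 < t" "t \<le> 1" "t * n < \<delta>"
  proof -
    show "0 < t" using d n unfolding t_def by simp
    show "t \<le> 1" unfolding t_def by simp
    have "t * n \<le> \<delta> / (2 * n) * n" unfolding t_def using n by (intro mult_right_mono) auto
    also have "\<dots> = \<delta> / 2" using n by simp
    finally show "t * n < \<delta>" using d by simp
  qed
  define w where "w = xs + t *\<^sub>R (z - xs)"
  have "w = (1 - t) *\<^sub>R xs + t *\<^sub>R z" unfolding w_def by (simp add: algebra_simps)
  then have "f w \<le> (1 - t) * f xs + t * f z"
    using convex_onD[OF conv, of t xs z] t by simp
  then have fw: "f w \<le> f xs" using fz by (simp add: algebra_simps)
  have nw: "norm (w - xs) = t * n" unfolding w_def n_def using t by simp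
  have "w \<in> ball xs \<delta>" "xs \<in> ball xs \<delta>" using nw t d by (auto simp: dist_norm norm_minus_commute)
  then have "f w \<ge> f xs + inner (g xs) (w - xs) + \<mu> / 2 * (norm (w - xs))\<^sup>2" using d(3) by blast
  then have "f w \<ge> f xs + \<mu> / 2 * (t * n)\<^sup>2" using g_xs nw by simp
  moreover have "\<mu> / 2 * (t * n)\<^sup>2 > 0" using d t n by simp
  ultimately show False using fw by simp
qed

lemma infdist_eq: "infdist (x 0) Xs = norm (x 0 - xs)"
  using Xs_single by (simp add: dist_norm)

lemma eta_nonneg: "\<eta> \<ge> 0"
proof -
  have "0 \<le> 2 * \<alpha> 0 * \<gamma> 0 * \<theta> 0 * (f (x 0) - fstar)"
    using \<alpha>0 \<theta>0 gam_pos[of 0] F_nonneg[of 0] unfolding F_def by simp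
  then show ?thesis unfolding \<eta>_def by simp
qed

lemma R_pos: "R > 0"
proof -
  have "sqrt \<eta> \<ge> 0" using eta_nonneg by simp
  then have "3 * sqrt \<eta> + infdist (x 0) Xs + norm (x 0) \<ge> 0" using infdist_nonneg[of "x 0" Xs] norm_ge_zero[of "x 0"] by linarith
  then show ?thesis using R by simp
qed

lemma LW_lip': "u \<in> W \<Longrightarrow> v \<in> W \<Longrightarrow> norm (g u - g v) \<le> LW * norm (u - v)"
  using LW_lip unfolding W_def by blast

lemma mu_facts: "\<mu>W > 0" "\<mu>W \<le> LW"
  "\<And>u v. u \<in> W \<Longrightarrow> v \<in> W \<Longrightarrow> inner (g v - g u) (v - u) \<ge> \<mu>W * (norm (v - u))\<^sup>2"
proof -
  define M where "M = {inner (g v - g u) (v - u) / (norm (v - u))\<^sup>2 | u v.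
                        u \<in> cball (0::'a) R \<and> v \<in> cball 0 R \<and> u \<noteq> v}"
  have muM: "\<mu>W = Inf M" unfolding M_def \<mu>W_def by simp
  obtain \<mu>0 where mu0: "\<mu>0 > 0" "\<And>u v. u \<in> cball 0 R \<Longrightarrow> v \<in> cball 0 R \<Longrightarrow> inner (g v - g u) (v - u) \<ge> \<mu>0 * (norm (v - u))\<^sup>2"
    using lsc_mono[OF lsc compact_cball convex_cball, of 0 R] by blast
  have Mlow: "\<mu>0 \<le> y" if yM: "y \<in> M" for y
  proof -
    obtain u v where uv: "u \<in> cball 0 R" "v \<in> cball 0 R" "u \<noteq> v" "y = inner (g v - g u) (v - u) / (norm (v - u))\<^sup>2"
      using yM unfolding M_def by blast
    have "(norm (v - u))\<^sup>2 > 0" using uv(3) by simp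
    then show ?thesis using mu0(2)[OF uv(1,2)] uv(4) by (simp add: le_divide_eq)
  qed
  obtain v :: 'a where v: "norm v = R" using vector_choose_size[of R] R_pos by auto
  have v0: "v \<noteq> 0" using v R_pos by auto
  have zc: "0 \<in> cball (0::'a) R" "v \<in> cball 0 R" using v R_pos by auto
  define y0 where "y0 = inner (g v - g 0) (v - 0) / (norm (v - 0))\<^sup>2"
  have y0M: "y0 \<in> M" unfolding M_def y0_def using zc v0 by blast
  have Mne: "M \<noteq> {}" using y0M by blast
  have bdd: "bdd_below M" unfolding bdd_below_def using Mlow by blast
  have "\<mu>W \<ge> \<mu>0" unfolding muM by (rule cInf_greatest[OF Mne]) (use Mlow in auto)
  then show "\<mu>W > 0" using mu0 by simp
  have "\<mu>W \<le> y0" unfolding muM by (rule cInf_lower[OF y0M bdd])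
  also have "y0 \<le> LW"
  proof -
    have "inner (g v - g 0) v \<le> norm (g v - g 0) * norm v" by (rule norm_cauchy_schwarz)
    also have "\<dots> \<le> LW * norm v * norm v" using LW_lip zc by (intro mult_right_mono) (metis diff_zero, simp)
    finally have "inner (g v - g 0) v \<le> LW * (norm v)\<^sup>2" by (simp add: power2_eq_square)
    then show ?thesis unfolding y0_def using v0 by (simp add: divide_le_eq)
  qed
  finally show "\<mu>W \<le> LW" .
  fix u v assume uv: "u \<in> W" "v \<in> W"
  show "inner (g v - g u) (v - u) \<ge> \<mu>W * (norm (v - u))\<^sup>2"
  proof (cases "u = v")
    case True then show ?thesis by simp
  next
    case False
    have yM: "inner (g v - g u) (v - u) / (norm (v - u))\<^sup>2 \<in> M" unfolding M_def using uv False W_def by blast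
    have "\<mu>W \<le> inner (g v - g u) (v - u) / (norm (v - u))\<^sup>2" unfolding muM by (rule cInf_lower[OF yM bdd])
    moreover have "(norm (v - u))\<^sup>2 > 0" using False by simp
    ultimately show ?thesis by (simp add: le_divide_eq)
  qed
qed

lemma W_convex: "convex W" unfolding W_def by simp

lemma sconv: "y \<in> W \<Longrightarrow> z \<in> W \<Longrightarrow> f y \<ge> f z + inner (g z) (y - z) + \<mu>W / 2 * (norm (y - z))\<^sup>2"
  by (rule grad_ineq[OF grad W_convex]) (use mu_facts(3) in auto)

lemma descent: "y \<in> W \<Longrightarrow> z \<in> W \<Longrightarrow> f y \<le> f z + inner (g z) (y - z) + LW / 2 * (norm (y - z))\<^sup>2"
proof -
  assume yz: "y \<in> W" "z \<in> W"
  have d: "GDERIV (\<lambda>x. - f x) z :> - g z" for z using GDERIV_minus[OF grad] .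
  have m: "inner (- g a - - g b) (a - b) \<ge> (- LW) * (norm (a - b))\<^sup>2" if "a \<in> W" "b \<in> W" for a b
  proof -
    have "inner (g a - g b) (a - b) \<le> norm (g a - g b) * norm (a - b)" by (rule norm_cauchy_schwarz)
    also have "\<dots> \<le> LW * norm (a - b) * norm (a - b)" using LW_lip'[OF that] by (intro mult_right_mono) auto
    finally show ?thesis by (simp add: power2_eq_square inner_diff_left)
  qed
  have "- f y \<ge> - f z + inner (- g z) (y - z) + (- LW) / 2 * (norm (y - z))\<^sup>2"
    by (rule grad_ineq[OF d W_convex m yz])
  then show ?thesis by simp
qed

lemma gradC: "z \<in> W \<Longrightarrow> z - (1 / LW) *\<^sub>R g z \<in> W \<Longrightarrow> (norm (g z))\<^sup>2 \<le> 2 * LW * (f z - fstar)"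
proof -
  assume zW: "z \<in> W" and yW: "z - (1 / LW) *\<^sub>R g z \<in> W"
  have "f (z - (1 / LW) *\<^sub>R g z) \<le> f z + inner (g z) (- (1 / LW) *\<^sub>R g z) + LW / 2 * (norm (- (1 / LW) *\<^sub>R g z))\<^sup>2"
    using descent[OF yW zW] by simp
  also have "\<dots> = f z - (norm (g z))\<^sup>2 / (2 * LW)"
    using LW_pos by (simp add: power2_eq_square inner_commute field_simps norm_mult flip: power2_norm_eq_inner)
  finally have "f xs \<le> f z - (norm (g z))\<^sup>2 / (2 * LW)" using xs_min[of "z - (1 / LW) *\<^sub>R g z"] by simp
  then show ?thesis using LW_pos unfolding fstar_eq by (simp add: field_simps)
qed

definition "Psi k = D (Suc k) + cc * (norm (x (Suc k) - x k))\<^sup>2 + lam k * (2 + ss * \<theta> k) * F k"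

lemma step_vec: "x (Suc k) - x k = - (lam k *\<^sub>R g (x k))"
  using iter[of k] unfolding lam_def by simp

lemma b_sq: "(norm (x (Suc k) - x k))\<^sup>2 = (lam k)\<^sup>2 * (norm (g (x k)))\<^sup>2"
  unfolding step_vec using lam_pos[of k] by (simp add: power_mult_distrib)

lemma norm_sq_step: "(norm (a - t *\<^sub>R b))\<^sup>2 = (norm a)\<^sup>2 - 2 * t * inner b a + t\<^sup>2 * (norm b)\<^sup>2"
  for a b :: 'a
proof -
  have "(norm (a - t *\<^sub>R b))\<^sup>2 = inner (a - t *\<^sub>R b) (a - t *\<^sub>R b)" by (simp add: power2_norm_eq_inner)
  also have "\<dots> = inner a a - 2 * t * inner b a + t * t * inner b b"
    by (simp add: inner_diff_left inner_diff_right inner_commute algebra_simps)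
  also have "inner a a = (norm a)\<^sup>2" by (simp add: power2_norm_eq_inner)
  also have "inner b b = (norm b)\<^sup>2" by (simp add: power2_norm_eq_inner)
  finally show ?thesis by (simp add: power2_eq_square)
qed

lemma xs_norm: "norm xs \<le> norm (x 0) + infdist (x 0) Xs"
  unfolding infdist_eq using norm_triangle_ineq4[of "x 0" "x 0 - xs"] by (simp add: norm_minus_commute)

lemma sqrt_eta: "sqrt \<eta> \<ge> 0" using eta_nonneg by simp

lemma xs_W: "xs \<in> W"
  unfolding W_def mem_cball_0 using xs_norm R sqrt_eta by linarith

lemma inW: assumes "D k \<le> \<eta>" shows "x k \<in> W" "x k - (1 / LW) *\<^sub>R g (x k) \<in> W"
proof -
  have n: "norm (x k - xs) \<le> sqrt \<eta>"
  proof -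
    have "norm (x k - xs) = sqrt (D k)" unfolding D_def by simp
    also have "\<dots> \<le> sqrt \<eta>" using assms by simp
    finally show ?thesis .
  qed
  have "norm (x k) \<le> norm xs + norm (x k - xs)" using norm_triangle_ineq2[of "x k" xs] by simp
  then show xk: "x k \<in> W" unfolding W_def mem_cball_0 using n xs_norm R sqrt_eta by linarith
  have "norm (g (x k)) \<le> LW * norm (x k - xs)" using LW_lip'[OF xk xs_W] g_xs by simp
  then have "norm ((1 / LW) *\<^sub>R g (x k)) \<le> norm (x k - xs)" using LW_pos by (simp add: field_simps)
  then have "norm (x k - (1 / LW) *\<^sub>R g (x k) - xs) \<le> 2 * sqrt \<eta>"
    using n norm_triangle_ineq4[of "x k - xs" "(1 / LW) *\<^sub>R g (x k)"] by (simp add: algebra_simps)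
  moreover have "norm (x k - (1 / LW) *\<^sub>R g (x k)) \<le> norm xs + norm (x k - (1 / LW) *\<^sub>R g (x k) - xs)"
    using norm_triangle_ineq2[of "x k - (1 / LW) *\<^sub>R g (x k)" xs] by simp
  ultimately show "x k - (1 / LW) *\<^sub>R g (x k) \<in> W" unfolding W_def mem_cball_0 using xs_norm R sqrt_eta by linarith
qed

lemma stepA: assumes "x k \<in> W"
  shows "D (Suc k) \<le> (1 - \<mu>W * lam k) * D k - 2 * lam k * F k + (lam k)\<^sup>2 * (norm (g (x k)))\<^sup>2"
proof -
  have e: "x (Suc k) - xs = (x k - xs) - lam k *\<^sub>R g (x k)" using iter[of k] unfolding lam_def by simp
  have "D (Suc k) = D k - 2 * lam k * inner (g (x k)) (x k - xs) + (lam k)\<^sup>2 * (norm (g (x k)))\<^sup>2"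
    unfolding D_def e norm_sq_step by simp
  moreover have "f xs \<ge> f (x k) + inner (g (x k)) (xs - x k) + \<mu>W / 2 * D k"
    using sconv[OF xs_W assms] unfolding D_def by (simp add: norm_minus_commute)
  then have "inner (g (x k)) (x k - xs) \<ge> F k + \<mu>W / 2 * D k"
    using fstar_eq unfolding F_def by (simp add: inner_diff_right)
  then have "2 * lam k * inner (g (x k)) (x k - xs) \<ge> 2 * lam k * (F k + \<mu>W / 2 * D k)"
    using lam_pos[of k] by (intro mult_left_mono) auto
  ultimately show ?thesis by (simp add: algebra_simps)
qed

lemma lipstep: "lam (Suc j) * norm (g (x (Suc j)) - g (x j)) \<le> \<omega> * norm (x (Suc j) - x j)"
proof (cases "x (Suc j) = x j")
  case True then show ?thesis by simp
next
  case False
  have nx: "norm (x (Suc j) - x j) > 0" using False by simp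
  have Ld: "L (Suc j) = norm (g (x (Suc j)) - g (x j)) / norm (x (Suc j) - x j)" using L_def[of "Suc j"] by simp
  show ?thesis
  proof (cases "L (Suc j) = 0")
    case True
    then have "norm (g (x (Suc j)) - g (x j)) = 0" using Ld nx by simp
    then show ?thesis using om nx by simp
  next
    case False
    have Lp: "L (Suc j) > 0" using False L_nonneg[of "Suc j"] by simp
    have "lam (Suc j) * L (Suc j) \<le> \<omega>" using lam_le_L[OF False] Lp by (simp add: le_divide_eq)
    then have "lam (Suc j) * L (Suc j) * norm (x (Suc j) - x j) \<le> \<omega> * norm (x (Suc j) - x j)"
      using nx by (intro mult_right_mono) auto
    then show ?thesis using Ld nx by simp
  qed
qed

lemma stepB: assumes W: "x j \<in> W" "x (Suc j) \<in> W"
  shows "(lam (Suc j))\<^sup>2 * (norm (g (x (Suc j))))\<^sup>2 \<le> (\<omega>\<^sup>2 - \<mu>W * lam (Suc j) * \<theta> (Suc j)) * (norm (x (Suc j) - x j))\<^sup>2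
           + lam (Suc j) * \<theta> (Suc j) * (F j - F (Suc j))"
proof -
  define u where "u = g (x j)"
  define v where "v = g (x (Suc j))"
  define lk where "lk = lam (Suc j)"
  define lj where "lj = lam j"
  define dx where "dx = x (Suc j) - x j"
  have lj: "lj > 0" unfolding lj_def using lam_pos by simp
  have lk: "lk > 0" unfolding lk_def using lam_pos by simp
  have th: "\<theta> (Suc j) = lk / lj" unfolding lk_def lj_def by (rule th_rec)
  have dxu: "dx = - (lj *\<^sub>R u)" unfolding dx_def u_def lj_def by (rule step_vec)
  have id: "(norm v)\<^sup>2 = (norm (v - u))\<^sup>2 + inner (v - u) u + inner u v"
    by (simp add: power2_norm_eq_inner inner_diff_left inner_diff_right inner_commute)
  have i1: "lk * norm (v - u) \<le> \<omega> * norm dx" unfolding lk_def v_def u_def dx_def by (rule lipstep)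
  have i1': "lk\<^sup>2 * (norm (v - u))\<^sup>2 \<le> \<omega>\<^sup>2 * (norm dx)\<^sup>2"
  proof -
    have "(lk * norm (v - u))\<^sup>2 \<le> (\<omega> * norm dx)\<^sup>2" using i1 lk by (intro power_mono) auto
    then show ?thesis by (simp add: power_mult_distrib)
  qed
  have m: "inner (v - u) dx \<ge> \<mu>W * (norm dx)\<^sup>2" unfolding v_def u_def dx_def by (rule mu_facts(3)[OF W])
  have i2: "lk\<^sup>2 * inner (v - u) u = - (lk * \<theta> (Suc j)) * inner (v - u) dx"
    unfolding th dxu using lj by (simp add: power2_eq_square field_simps)
  have i2': "lk\<^sup>2 * inner (v - u) u \<le> - ((lk * \<theta> (Suc j)) * (\<mu>W * (norm dx)\<^sup>2))"
    unfolding i2 using m lk th_pos[of "Suc j"] by (simp add: mult_left_mono)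
  have c: "f (x j) \<ge> f (x (Suc j)) + inner v (x j - x (Suc j)) + \<mu>W / 2 * (norm (x j - x (Suc j)))\<^sup>2"
    unfolding v_def by (rule sconv[OF W(1) W(2)])
  have "\<mu>W / 2 * (norm (x j - x (Suc j)))\<^sup>2 \<ge> 0" using mu_facts(1) by simp
  then have c': "inner v (x j - x (Suc j)) \<le> F j - F (Suc j)" using c unfolding F_def by simp
  have i3: "lk\<^sup>2 * inner u v = (lk * \<theta> (Suc j)) * inner v (x j - x (Suc j))"
  proof -
    have "x j - x (Suc j) = lj *\<^sub>R u" using dxu unfolding dx_def by (simp add: algebra_simps)
    then show ?thesis unfolding th using lj by (simp add: power2_eq_square field_simps inner_commute)
  qed
  have i3': "lk\<^sup>2 * inner u v \<le> (lk * \<theta> (Suc j)) * (F j - F (Suc j))"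
    unfolding i3 using c' lk th_pos[of "Suc j"] by (simp add: mult_left_mono)
  have "lk\<^sup>2 * (norm v)\<^sup>2 = lk\<^sup>2 * (norm (v - u))\<^sup>2 + lk\<^sup>2 * inner (v - u) u + lk\<^sup>2 * inner u v"
    unfolding id by (simp add: algebra_simps)
  also have "\<dots> \<le> \<omega>\<^sup>2 * (norm dx)\<^sup>2 - (lk * \<theta> (Suc j)) * (\<mu>W * (norm dx)\<^sup>2) + (lk * \<theta> (Suc j)) * (F j - F (Suc j))"
    using i1' i2' i3' by linarith
  finally show ?thesis unfolding lk_def v_def dx_def by (simp add: algebra_simps)
qed

lemma stepStar: assumes W: "x j \<in> W" "x (Suc j) \<in> W"
  shows "Psi (Suc j) \<le> (1 - \<mu>W * lam (Suc j)) * D (Suc j)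
     + cc * (1 - \<mu>W * lam (Suc j) * \<theta> (Suc j) / \<omega>\<^sup>2) * (norm (x (Suc j) - x j))\<^sup>2
     + ss * lam (Suc j) * \<theta> (Suc j) * F j"
proof -
  define B where "B = (lam (Suc j))\<^sup>2 * (norm (g (x (Suc j))))\<^sup>2"
  define a2 where "a2 = (norm (x (Suc j) - x j))\<^sup>2"
  define lt where "lt = lam (Suc j) * \<theta> (Suc j)"
  have A: "D (Suc (Suc j)) \<le> (1 - \<mu>W * lam (Suc j)) * D (Suc j) - 2 * lam (Suc j) * F (Suc j) + B"
    unfolding B_def by (rule stepA[OF W(2)])
  have Bb: "B \<le> (\<omega>\<^sup>2 - \<mu>W * lt) * a2 + lt * (F j - F (Suc j))"
    unfolding B_def a2_def lt_def using stepB[OF W] by (simp add: mult.assoc)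
  have ssB: "ss * B \<le> ss * ((\<omega>\<^sup>2 - \<mu>W * lt) * a2 + lt * (F j - F (Suc j)))"
    using Bb cc_ss by (intro mult_left_mono) auto
  have bk: "(norm (x (Suc (Suc j)) - x (Suc j)))\<^sup>2 = B" unfolding B_def by (rule b_sq)
  have e1: "ss * ((\<omega>\<^sup>2 - \<mu>W * lt) * a2 + lt * (F j - F (Suc j)))
      = cc * (1 - \<mu>W * lt / \<omega>\<^sup>2) * a2 + ss * lt * F j - ss * lt * F (Suc j)"
    using cc_ss(5) om by (simp add: field_simps)
  have "Psi (Suc j) = D (Suc (Suc j)) + cc * B + 2 * lam (Suc j) * F (Suc j) + ss * lt * F (Suc j)"
    unfolding Psi_def bk lt_def by (simp add: algebra_simps)
  also have "\<dots> \<le> (1 - \<mu>W * lam (Suc j)) * D (Suc j) + (1 + cc) * B + ss * lt * F (Suc j)"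
    using A by (simp add: algebra_simps)
  also have "(1 + cc) * B = ss * B" using cc_ss(6) by simp
  finally show ?thesis using ssB e1 unfolding a2_def lt_def by (simp add: mult.assoc)
qed

end



context setting begin

lemma g_zero_prop: "g (x i) = 0 \<Longrightarrow> i \<le> n \<Longrightarrow> g (x n) = 0"
proof (induction n)
  case 0 then show ?case by simp
next
  case (Suc n)
  show ?case
  proof (cases "i = Suc n")
    case True then show ?thesis using Suc by simp
  next
    case False
    then have "g (x n) = 0" using Suc by simp
    then have "x (Suc n) = x n" using iter[of n] by simp
    then show ?thesis using \<open>g (x n) = 0\<close> by simp
  qed
qed

lemma F_zero: "x k \<in> W \<Longrightarrow> g (x k) = 0 \<Longrightarrow> F k = 0"
proof -
  assume a: "x k \<in> W" "g (x k) = 0"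
  have "f xs \<ge> f (x k) + inner (g (x k)) (xs - x k) + \<mu>W / 2 * (norm (xs - x k))\<^sup>2"
    by (rule sconv[OF xs_W a(1)])
  moreover have "\<mu>W / 2 * (norm (xs - x k))\<^sup>2 \<ge> 0" using mu_facts(1) by simp
  ultimately have "F k \<le> 0" using a(2) fstar_eq unfolding F_def by simp
  then show ?thesis using F_nonneg[of k] by simp
qed

lemma L_le: "x j \<in> W \<Longrightarrow> x (Suc j) \<in> W \<Longrightarrow> L (Suc j) \<le> LW"
proof -
  assume W: "x j \<in> W" "x (Suc j) \<in> W"
  have Ld: "L (Suc j) = norm (g (x (Suc j)) - g (x j)) / norm (x (Suc j) - x j)" using L_def[of "Suc j"] by simp
  show ?thesis
  proof (cases "x (Suc j) = x j")
    case True then show ?thesis using Ld LW_pos by simp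
  next
    case False
    then have "norm (x (Suc j) - x j) > 0" by simp
    then show ?thesis using Ld LW_lip'[OF W(2) W(1)] by (simp add: divide_le_eq)
  qed
qed

lemma L_ge: "x j \<in> W \<Longrightarrow> x (Suc j) \<in> W \<Longrightarrow> x (Suc j) \<noteq> x j \<Longrightarrow> L (Suc j) \<ge> \<mu>W"
proof -
  assume W: "x j \<in> W" "x (Suc j) \<in> W" and ne: "x (Suc j) \<noteq> x j"
  have Ld: "L (Suc j) = norm (g (x (Suc j)) - g (x j)) / norm (x (Suc j) - x j)" using L_def[of "Suc j"] by simp
  have n: "norm (x (Suc j) - x j) > 0" using ne by simp
  have "\<mu>W * (norm (x (Suc j) - x j))\<^sup>2 \<le> inner (g (x (Suc j)) - g (x j)) (x (Suc j) - x j)"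
    by (rule mu_facts(3)[OF W])
  also have "\<dots> \<le> norm (g (x (Suc j)) - g (x j)) * norm (x (Suc j) - x j)" by (rule norm_cauchy_schwarz)
  finally have "\<mu>W * norm (x (Suc j) - x j) \<le> norm (g (x (Suc j)) - g (x j))"
    using n by (simp add: power2_eq_square)
  then show ?thesis using Ld n by (simp add: le_divide_eq)
qed

lemma lmin_facts: "lmin > 0" "lmin \<le> \<omega> / LW" "LW * lmin \<le> \<omega>" "\<mu>W * lmin \<le> \<omega>" "lmin \<le> lam 0"
proof -
  show "lmin > 0" unfolding lmin_def using lam_pos om LW_pos by simp
  show l: "lmin \<le> \<omega> / LW" unfolding lmin_def by simp
  then show l2: "LW * lmin \<le> \<omega>" using LW_pos by (simp add: le_divide_eq mult.commute)
  have "\<mu>W * lmin \<le> LW * lmin" using mu_facts(2) \<open>lmin > 0\<close> by (intro mult_right_mono) auto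
  then show "\<mu>W * lmin \<le> \<omega>" using l2 by simp
  show "lmin \<le> lam 0" unfolding lmin_def by simp
qed

lemma lam_ge_min: "(\<And>k. k \<le> n \<Longrightarrow> x k \<in> W) \<Longrightarrow> lam n \<ge> lmin"
proof (induction n)
  case 0 then show ?case using lmin_facts by simp
next
  case (Suc j)
  have IH: "lam j \<ge> lmin" using Suc by simp
  have W: "x j \<in> W" "x (Suc j) \<in> W" using Suc.prems by auto
  show ?case
  proof (cases "L (Suc j) = 0")
    case True
    then have "lam (Suc j) = lam j * sq j" using lam_rec[of j] by simp
    moreover have "lam j * sq j \<ge> lam j" using sq_ge1[of j] th_pos[of j] lam_pos[of j] by simp
    ultimately show ?thesis using IH by simp
  next
    case False
    then have Lp: "L (Suc j) > 0" using L_nonneg[of "Suc j"] by simp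
    have "\<omega> / L (Suc j) \<ge> \<omega> / LW" using L_le[OF W] Lp om by (intro divide_left_mono) auto
    then have "\<omega> / L (Suc j) \<ge> lmin" using lmin_facts by simp
    then show ?thesis using lam_ge[of j] IH by (simp add: min_def split: if_splits)
  qed
qed

lemma lam_le_mu: "x j \<in> W \<Longrightarrow> x (Suc j) \<in> W \<Longrightarrow> g (x j) \<noteq> 0 \<Longrightarrow> lam (Suc j) \<le> \<omega> / \<mu>W"
proof -
  assume W: "x j \<in> W" "x (Suc j) \<in> W" and g0: "g (x j) \<noteq> 0"
  have "x (Suc j) \<noteq> x j" using step_vec[of j] g0 lam_pos[of j] by auto
  then have Lg: "L (Suc j) \<ge> \<mu>W" using L_ge[OF W] by simp
  then have "L (Suc j) \<noteq> 0" using mu_facts(1) by simp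
  then have "lam (Suc j) \<le> \<omega> / L (Suc j)" by (rule lam_le_L)
  also have "\<dots> \<le> \<omega> / \<mu>W" using Lg mu_facts(1) om by (intro divide_left_mono) auto
  finally show ?thesis .
qed

lemma m_eq: "m = \<mu>W * lmin / \<omega>"
proof -
  have "\<mu>W * lmin / \<omega> = min (\<mu>W * lam 0 / \<omega>) (\<mu>W * (\<omega> / LW) / \<omega>)"
    unfolding lmin_def using mu_facts(1) om
    by (simp add: min_mult_distrib_left min_divide_distrib_right)
  also have "\<dots> = m" unfolding m_def lam_def using om by (simp add: mult_ac)
  finally show ?thesis by simp
qed

lemma m_pos: "m > 0" unfolding m_eq using mu_facts(1) lmin_facts(1) om by simp

lemma q_facts: "qhat > 0" "qhat \<le> \<mu>W * lmin / 2" "qhat \<le> 1/2"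
proof -
  have q1: "\<mu>W / 2 * min (\<alpha> 0 * \<gamma> 0) (\<omega> / LW) = \<mu>W * lmin / 2" unfolding lmin_def lam_def by simp
  have p1: "\<mu>W * lmin / 2 > 0" using mu_facts(1) lmin_facts(1) by simp
  have p2: "\<mu>W * (1 - \<omega>\<^sup>2) / (2 * \<omega> ^ 3 * LW + \<mu>W * (1 - \<omega>\<^sup>2)) > 0"
    using mu_facts(1) om LW_pos by (intro divide_pos_pos add_pos_pos mult_pos_pos) auto
  have p3: "(\<tau> - 1) * m / (\<tau> * (2 * (1 - \<omega>\<^sup>2) + m)) > 0"
    using \<tau> m_pos om by (intro divide_pos_pos mult_pos_pos add_pos_pos) auto
  show "qhat > 0" unfolding qhat_def q1 using p1 p2 p3 by simp
  show q2: "qhat \<le> \<mu>W * lmin / 2" unfolding qhat_def q1 by (rule min.cobounded1)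
  also have "\<mu>W * lmin / 2 \<le> \<omega> / 2" using lmin_facts by simp
  also have "\<omega> / 2 \<le> 1/2" using om by simp
  finally show "qhat \<le> 1/2" .
qed

lemma q_kappa: assumes "0 \<le> \<kappa>" "\<kappa> \<le> 2 * cc * LW * \<omega> / \<mu>W" shows "qhat * (2 + \<kappa>) \<le> 2"
proof -
  define A where "A = 2 * cc * LW * \<omega> / \<mu>W"
  have A0: "A \<ge> 0" unfolding A_def using cc_ss om LW_pos mu_facts(1) by simp
  have q2: "\<mu>W * (1 - \<omega>\<^sup>2) / (2 * \<omega> ^ 3 * LW + \<mu>W * (1 - \<omega>\<^sup>2)) = 1 / (1 + A)"
  proof -
    have "1 - \<omega>\<^sup>2 > 0" using om by simp
    then show ?thesis unfolding A_def cc_def using mu_facts(1) om LW_pos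
      by (simp add: field_simps power2_eq_square power3_eq_cube)
  qed
  have "qhat \<le> 1 / (1 + A)" unfolding qhat_def q2[symmetric] by simp
  then have "qhat * (2 + \<kappa>) \<le> 1 / (1 + A) * (2 + A)" using assms A_def
    by (intro mult_mono) (auto simp: q_facts(1) less_imp_le)
  also have "\<dots> \<le> 2" using A0 by (simp add: field_simps)
  finally show ?thesis .
qed

lemma q_th: assumes "th' \<ge> m" shows "qhat * (2 + ss * th') \<le> ss * th' * (1 - 1 / \<tau>)"
proof -
  have om1: "1 - \<omega>\<^sup>2 > 0" using om by simp
  have t0: "\<tau> > 0" using \<tau> by simp
  have mp: "m > 0" by (rule m_pos)
  have thp: "th' > 0" using assms mp by simp
  have "qhat \<le> (\<tau> - 1) * m / (\<tau> * (2 * (1 - \<omega>\<^sup>2) + m))" unfolding qhat_def by simp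
  also have "\<dots> \<le> (\<tau> - 1) * th' / (\<tau> * (2 * (1 - \<omega>\<^sup>2) + th'))"
  proof -
    have "(\<tau> - 1) * m * (\<tau> * (2 * (1 - \<omega>\<^sup>2) + th')) \<le> (\<tau> - 1) * th' * (\<tau> * (2 * (1 - \<omega>\<^sup>2) + m))"
    proof -
      have "(\<tau> - 1) * \<tau> * (2 * (1 - \<omega>\<^sup>2)) * m \<le> (\<tau> - 1) * \<tau> * (2 * (1 - \<omega>\<^sup>2)) * th'"
        using assms \<tau> om1 by (intro mult_left_mono) auto
      then show ?thesis by (simp add: algebra_simps)
    qed
    moreover have "\<tau> * (2 * (1 - \<omega>\<^sup>2) + m) > 0" "\<tau> * (2 * (1 - \<omega>\<^sup>2) + th') > 0"
      using t0 om1 mp thp by (auto intro!: mult_pos_pos add_pos_pos)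
    ultimately show ?thesis by (intro div_le_div_cross) auto
  qed
  also have "\<dots> = ss * th' * (1 - 1 / \<tau>) / (2 + ss * th')"
  proof -
    define k where "k = \<tau> * (1 - \<omega>\<^sup>2)"
    have k: "k > 0" unfolding k_def using om1 t0 by simp
    have e1: "ss * th' * (1 - 1 / \<tau>) = ((\<tau> - 1) * th') / k"
      unfolding ss_def k_def using om1 t0 by (simp add: field_simps)
    have e2: "2 + ss * th' = (\<tau> * (2 * (1 - \<omega>\<^sup>2) + th')) / k"
      unfolding ss_def k_def using om1 t0 by (simp add: field_simps)
    show ?thesis unfolding e1 e2 using k by simp
  qed
  finally have "qhat \<le> ss * th' * (1 - 1 / \<tau>) / (2 + ss * th')" .
  moreover have "2 + ss * th' > 0" using cc_ss thp by (simp add: add_pos_nonneg)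
  ultimately show ?thesis by (simp add: le_divide_eq)
qed

end



context setting begin

lemma contract_gen:
  assumes j1: "j \<ge> 1" and Wk: "\<And>k. k \<le> Suc j \<Longrightarrow> D k \<le> \<eta>"
    and qc: "q = 0 \<or> (q = qhat \<and> j \<ge> 2)"
  shows "Psi (Suc j) \<le> (1 - q) * Psi j"
proof -
  have inW': "x k \<in> W" if "k \<le> Suc j" for k using inW(1)[OF Wk[OF that]] .
  have W: "x j \<in> W" "x (Suc j) \<in> W" using inW' by auto
  have Wg: "x j - (1 / LW) *\<^sub>R g (x j) \<in> W" using inW(2)[OF Wk[of j]] by simp
  have star: "Psi (Suc j) \<le> (1 - \<mu>W * lam (Suc j)) * D (Suc j)
     + cc * (1 - \<mu>W * lam (Suc j) * \<theta> (Suc j) / \<omega>\<^sup>2) * (norm (x (Suc j) - x j))\<^sup>2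
     + ss * lam (Suc j) * \<theta> (Suc j) * F j" by (rule stepStar[OF W])
  define a2 where "a2 = (norm (x (Suc j) - x j))\<^sup>2"
  define X where "X = cc * a2"
  define Y where "Y = lam j * F j"
  define P where "P = \<mu>W * lam j / \<omega>\<^sup>2"
  define t where "t = (\<theta> (Suc j))\<^sup>2"
  define T where "T = 2 * (1 - \<omega>\<^sup>2) + \<theta> j / \<tau>"
  define \<kappa> where "\<kappa> = 2 * cc * LW * lam j"
  define \<mu>l where "\<mu>l = \<mu>W * lam (Suc j)"
  have lj: "lam j > 0" using lam_pos by simp
  have lsj: "lam (Suc j) = \<theta> (Suc j) * lam j" by (rule lam_th)
  have rhs: "(1 - \<mu>W * lam (Suc j)) * D (Suc j)
     + cc * (1 - \<mu>W * lam (Suc j) * \<theta> (Suc j) / \<omega>\<^sup>2) * (norm (x (Suc j) - x j))\<^sup>2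
     + ss * lam (Suc j) * \<theta> (Suc j) * F j = (1 - \<mu>l) * D (Suc j) + (X - P * t * X) + ss * t * Y"
    unfolding \<mu>l_def X_def P_def t_def Y_def a2_def lsj by (simp add: algebra_simps power2_eq_square)
  have psi: "Psi j = D (Suc j) + X + (2 + ss * \<theta> j) * Y"
    unfolding Psi_def X_def Y_def a2_def by (simp add: algebra_simps)
  have Dk: "D (Suc j) \<ge> 0" unfolding D_def by simp
  have X0: "X \<ge> 0" unfolding X_def a2_def using cc_ss by simp
  have Y0: "Y \<ge> 0" unfolding Y_def using lj F_nonneg[of j] by simp
  have k0: "\<kappa> \<ge> 0" unfolding \<kappa>_def using cc_ss LW_pos lj by simp
  have XY: "X \<le> \<kappa> * Y"
  proof -
    have G: "(norm (g (x j)))\<^sup>2 \<le> 2 * LW * (f (x j) - fstar)" by (rule gradC[OF W(1) Wg])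
    have "X = cc * (lam j)\<^sup>2 * (norm (g (x j)))\<^sup>2" unfolding X_def a2_def b_sq by simp
    also have "\<dots> \<le> cc * (lam j)\<^sup>2 * (2 * LW * F j)"
      unfolding F_def using G cc_ss by (intro mult_left_mono) auto
    also have "\<dots> = \<kappa> * Y" unfolding \<kappa>_def Y_def by (simp add: power2_eq_square algebra_simps)
    finally show ?thesis .
  qed
  have P0: "P \<ge> 0" unfolding P_def using mu_facts(1) lj by simp
  have t0: "0 \<le> t" unfolding t_def by simp
  have tT: "t \<le> T" unfolding t_def T_def by (rule th_sq)
  have sT: "ss * T = 2 + ss * \<theta> j / \<tau>" unfolding T_def using cc_ss(7) by (simp add: algebra_simps)
  have sth: "ss * \<theta> j \<ge> 0" using cc_ss th_pos[of j] by simp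
  have om1: "1 - \<omega>\<^sup>2 > 0" using om by simp
  have T1: "T \<ge> 2 * (1 - \<omega>\<^sup>2)" unfolding T_def using th_pos[of j] \<tau> by simp
  show ?thesis
  proof (cases "q = 0")
    case True
    have mul0: "\<mu>l \<ge> 0" unfolding \<mu>l_def using mu_facts(1) lam_pos[of "Suc j"] by simp
    have "(1 - \<mu>l) * D (Suc j) + (X - P * t * X) + ss * t * Y \<le> (1 - 0) * (D (Suc j) + X + (2 + ss * \<theta> j) * Y)"
      by (rule contr_arith[OF Dk _ mul0 X0 Y0 XY k0 _ _ _ P0 t0 tT sT sth])
         (use sth \<tau> P0 T1 om1 in \<open>auto intro!: mult_nonneg_nonneg\<close>)
    then show ?thesis using star rhs psi True by simp
  next
    case False
    then have qq: "q = qhat" "j \<ge> 2" using qc by auto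
    have lmin_le: "lmin \<le> lam (Suc j)" by (rule lam_ge_min) (use inW' in auto)
    have qmu: "qhat \<le> \<mu>l"
    proof -
      have "\<mu>W * lmin \<le> \<mu>W * lam (Suc j)" using lmin_le mu_facts(1) by (intro mult_left_mono) auto
      moreover have "\<mu>W * lmin > 0" using lmin_facts(1) mu_facts(1) by simp
      ultimately show ?thesis unfolding \<mu>l_def using q_facts(2) by linarith
    qed
    show ?thesis
    proof (cases "g (x j) = 0")
      case True
      have "a2 = 0" unfolding a2_def b_sq using True by simp
      moreover have "F j = 0" by (rule F_zero[OF W(1) True])
      ultimately have "X = 0" "Y = 0" unfolding X_def Y_def by auto
      moreover have "(1 - \<mu>l) * D (Suc j) \<le> (1 - qhat) * D (Suc j)" using qmu Dk by (intro mult_right_mono) auto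
      ultimately show ?thesis using star rhs psi qq by simp
    next
      case False
      obtain i where i: "j = Suc (Suc i)" using qq(2) by (metis add_2_eq_Suc le_Suc_ex)
      have g1: "g (x (Suc i)) \<noteq> 0" using False g_zero_prop[of "Suc i" j] i by auto
      have g2: "g (x i) \<noteq> 0" using False g_zero_prop[of i j] i by auto
      have lamj: "lam j \<le> \<omega> / \<mu>W" unfolding i by (rule lam_le_mu) (use inW' i g1 in auto)
      have lamj1: "lam (Suc i) \<le> \<omega> / \<mu>W" by (rule lam_le_mu) (use inW' i g2 in auto)
      have lminj: "lmin \<le> lam j" by (rule lam_ge_min) (use inW' in auto)
      have thjm: "\<theta> j \<ge> m"
      proof -
        have "\<theta> j = lam j / lam (Suc i)" unfolding i by (rule th_rec)
        moreover have "lmin / (\<omega> / \<mu>W) \<le> lam j / lam (Suc i)"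
          using lminj lamj1 lam_pos[of "Suc i"] lmin_facts(1) by (intro frac_le) auto
        moreover have "lmin / (\<omega> / \<mu>W) = m" unfolding m_eq using om by simp
        ultimately show ?thesis by simp
      qed
      have h3: "qhat * (2 + \<kappa>) \<le> 2"
      proof (rule q_kappa[OF k0])
        have "2 * cc * LW * lam j \<le> 2 * cc * LW * (\<omega> / \<mu>W)"
          using lamj cc_ss LW_pos by (intro mult_left_mono) auto
        then show "\<kappa> \<le> 2 * cc * LW * \<omega> / \<mu>W" unfolding \<kappa>_def by simp
      qed
      have h4: "qhat * (2 + ss * \<theta> j) \<le> ss * \<theta> j * (1 - 1 / \<tau>)" by (rule q_th[OF thjm])
      have h5: "qhat \<le> P * T"
      proof -
        have "(1 - \<omega>\<^sup>2) / \<omega>\<^sup>2 \<ge> 1/2" using om by (simp add: field_simps)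
        have "\<mu>W * lmin \<le> \<mu>W * lam j" using lminj mu_facts(1) by simp
        also have "\<dots> \<le> \<mu>W * lam j * (2 * (1 - \<omega>\<^sup>2) / \<omega>\<^sup>2)"
        proof -
          have "2 * (1 - \<omega>\<^sup>2) / \<omega>\<^sup>2 \<ge> 1" using om by (simp add: field_simps)
          moreover have "\<mu>W * lam j > 0" using mu_facts(1) lj by simp
          ultimately show ?thesis using mult_left_mono[of 1 "2 * (1 - \<omega>\<^sup>2) / \<omega>\<^sup>2" "\<mu>W * lam j"] by simp
        qed
        also have "\<dots> \<le> P * T" unfolding P_def using T1 mu_facts(1) lj om
          by (simp add: mult_left_mono divide_right_mono)
        moreover have "\<mu>W * lmin > 0" using mu_facts(1) lmin_facts(1) by simp
        ultimately show ?thesis using q_facts(2) by linarith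
      qed
      have "(1 - \<mu>l) * D (Suc j) + (X - P * t * X) + ss * t * Y \<le> (1 - qhat) * (D (Suc j) + X + (2 + ss * \<theta> j) * Y)"
        by (rule contr_arith[OF Dk _ qmu X0 Y0 XY k0 h3 h4 h5 P0 t0 tT sT sth]) (use q_facts in simp)
      then show ?thesis using star rhs psi qq by simp
    qed
  qed
qed

end



context setting begin

lemma D_nonneg: "D k \<ge> 0" unfolding D_def by simp

lemma eta_eq: "\<eta> = D 0 + 2 * (norm (x 1 - x 0))\<^sup>2 + 2 * lam 0 * \<theta> 0 * F 0"
proof -
  have "(norm (x 1 - x 0))\<^sup>2 = (lam 0)\<^sup>2 * (norm (g (x 0)))\<^sup>2" using b_sq[of 0] by simp
  then show ?thesis unfolding \<eta>_def D_def infdist_eq F_def lam_def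
    by (simp add: power_mult_distrib algebra_simps)
qed

lemma D0: "D 0 \<le> \<eta>"
proof -
  have "2 * lam 0 * \<theta> 0 * F 0 \<ge> 0" using lam_pos[of 0] th_pos[of 0] F_nonneg[of 0] by simp
  then show ?thesis unfolding eta_eq by simp
qed

lemma step0: "D 1 + 2 * lam 0 * F 0 \<le> D 0 + (norm (x 1 - x 0))\<^sup>2"
proof -
  have x0W: "x 0 \<in> W" using inW(1)[OF D0] .
  have A: "D 1 \<le> (1 - \<mu>W * lam 0) * D 0 - 2 * lam 0 * F 0 + (lam 0)\<^sup>2 * (norm (g (x 0)))\<^sup>2"
    using stepA[OF x0W] by simp
  have "\<mu>W * lam 0 * D 0 \<ge> 0" using mu_facts(1) lam_pos[of 0] D_nonneg[of 0] by simp
  moreover have "(norm (x 1 - x 0))\<^sup>2 = (lam 0)\<^sup>2 * (norm (g (x 0)))\<^sup>2" using b_sq[of 0] by simp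
  ultimately show ?thesis using A by (simp add: algebra_simps)
qed

lemma D1: "D 1 \<le> \<eta>"
proof -
  have "2 * lam 0 * F 0 \<ge> 0" "2 * lam 0 * \<theta> 0 * F 0 \<ge> 0" "(norm (x 1 - x 0))\<^sup>2 \<ge> 0"
    using lam_pos[of 0] th_pos[of 0] F_nonneg[of 0] by auto
  then show ?thesis using step0 unfolding eta_eq by linarith
qed

lemma M0: "cc * (lam 0)\<^sup>2 * (norm (g (x 0)))\<^sup>2 + 2 * lam 0 * F 0 \<le> \<eta>"
proof -
  have b: "(norm (x 1 - x 0))\<^sup>2 = (lam 0)\<^sup>2 * (norm (g (x 0)))\<^sup>2" using b_sq[of 0] by simp
  have "cc * (norm (x 1 - x 0))\<^sup>2 \<le> (norm (x 1 - x 0))\<^sup>2" using cc_ss by (simp add: mult_left_le_one_le)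
  moreover have "2 * lam 0 * \<theta> 0 * F 0 \<ge> 0" using lam_pos[of 0] th_pos[of 0] F_nonneg[of 0] by simp
  moreover have "D 1 \<ge> 0" by (rule D_nonneg)
  ultimately show ?thesis using step0 b unfolding eta_eq by (simp add: algebra_simps)
qed

lemma Psi_ge: "D (Suc n) \<le> Psi n" "cc * (lam n)\<^sup>2 * (norm (g (x n)))\<^sup>2 + 2 * lam n * F n \<le> Psi n"
proof -
  have a: "lam n * (2 + ss * \<theta> n) * F n = 2 * lam n * F n + ss * \<theta> n * (lam n * F n)" by (simp add: algebra_simps)
  have b: "ss * \<theta> n * (lam n * F n) \<ge> 0" using cc_ss th_pos[of n] lam_pos[of n] F_nonneg[of n] by simp
  have c: "2 * lam n * F n \<ge> 0" using lam_pos[of n] F_nonneg[of n] by simp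
  have d: "cc * (norm (x (Suc n) - x n))\<^sup>2 \<ge> 0" using cc_ss by simp
  show "D (Suc n) \<le> Psi n" unfolding Psi_def a using b c d by linarith
  show "cc * (lam n)\<^sup>2 * (norm (g (x n)))\<^sup>2 + 2 * lam n * F n \<le> Psi n"
    unfolding Psi_def a b_sq using b D_nonneg[of "Suc n"] by (simp add: mult.assoc)
qed

lemma Psi1: "Psi 1 \<le> \<eta>"
proof -
  have W: "x 0 \<in> W" "x (Suc 0) \<in> W" using inW(1)[OF D0] inW(1)[OF D1] by auto
  have star: "Psi (Suc 0) \<le> (1 - \<mu>W * lam (Suc 0)) * D (Suc 0)
     + cc * (1 - \<mu>W * lam (Suc 0) * \<theta> (Suc 0) / \<omega>\<^sup>2) * (norm (x (Suc 0) - x 0))\<^sup>2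
     + ss * lam (Suc 0) * \<theta> (Suc 0) * F 0" by (rule stepStar[OF W])
  define b2 where "b2 = (norm (x 1 - x 0))\<^sup>2"
  have b0: "b2 \<ge> 0" unfolding b2_def by simp
  have t1: "(1 - \<mu>W * lam (Suc 0)) * D (Suc 0) \<le> D 1"
  proof -
    have "\<mu>W * lam (Suc 0) * D (Suc 0) \<ge> 0" using mu_facts(1) lam_pos[of "Suc 0"] D_nonneg[of "Suc 0"] by simp
    then show ?thesis by (simp add: algebra_simps)
  qed
  have t2: "cc * (1 - \<mu>W * lam (Suc 0) * \<theta> (Suc 0) / \<omega>\<^sup>2) * (norm (x (Suc 0) - x 0))\<^sup>2 \<le> cc * b2"
  proof -
    have "\<mu>W * lam (Suc 0) * \<theta> (Suc 0) / \<omega>\<^sup>2 \<ge> 0" using mu_facts(1) lam_pos[of "Suc 0"] th_pos[of "Suc 0"] by simp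
    then have "cc * (1 - \<mu>W * lam (Suc 0) * \<theta> (Suc 0) / \<omega>\<^sup>2) \<le> cc" using cc_ss by (simp add: mult_left_le)
    then show ?thesis unfolding b2_def using b0 unfolding b2_def by (simp add: mult_right_mono)
  qed
  have t3: "ss * lam (Suc 0) * \<theta> (Suc 0) * F 0 \<le> (2 + 2 * \<theta> 0) * lam 0 * F 0"
  proof -
    have e: "ss * lam (Suc 0) * \<theta> (Suc 0) * F 0 = ss * (\<theta> (Suc 0))\<^sup>2 * (lam 0 * F 0)"
      using lam_th[of 0] by (simp add: power2_eq_square)
    have lf: "lam 0 * F 0 \<ge> 0" using lam_pos[of 0] F_nonneg[of 0] by simp
    have "ss * (\<theta> (Suc 0))\<^sup>2 \<le> ss * (2 * (1 - \<omega>\<^sup>2) + \<theta> 0 / \<tau>)" using th_sq[of 0] cc_ss by (intro mult_left_mono) auto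
    also have "\<dots> = 2 + ss * \<theta> 0 / \<tau>" using cc_ss(7) by (simp add: algebra_simps)
    also have "ss * \<theta> 0 / \<tau> \<le> 2 * \<theta> 0"
    proof -
      have "ss * \<theta> 0 \<ge> 0" using cc_ss th_pos[of 0] by simp
      then have "ss * \<theta> 0 / \<tau> \<le> ss * \<theta> 0 / 1" using \<tau> by (intro divide_left_mono) auto
      then have "ss * \<theta> 0 / \<tau> \<le> ss * \<theta> 0" by simp
      also have "\<dots> \<le> 2 * \<theta> 0" using cc_ss th_pos[of 0] by (intro mult_right_mono) auto
      finally show ?thesis .
    qed
    finally have "ss * (\<theta> (Suc 0))\<^sup>2 \<le> 2 + 2 * \<theta> 0" by simp
    then have "ss * (\<theta> (Suc 0))\<^sup>2 * (lam 0 * F 0) \<le> (2 + 2 * \<theta> 0) * (lam 0 * F 0)" using lf by (intro mult_right_mono) auto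
    then show ?thesis unfolding e by (simp add: mult.assoc)
  qed
  have s0: "D 1 + 2 * lam 0 * F 0 \<le> D 0 + b2" using step0 unfolding b2_def .
  have "cc * b2 \<le> b2" using cc_ss b0 by (simp add: mult_left_le_one_le)
  then have "Psi 1 \<le> D 0 + 2 * b2 + 2 * lam 0 * \<theta> 0 * F 0"
    using star t1 t2 t3 s0 by (simp add: algebra_simps)
  then show ?thesis unfolding eta_eq b2_def .
qed

lemma main: "n \<ge> 1 \<Longrightarrow> (\<forall>k \<le> Suc n. D k \<le> \<eta>) \<and> Psi n \<le> \<eta> * (1 - qhat) ^ (n - 2)"
proof (induction n rule: nat_induct_at_least)
  case base
  have "D (Suc (Suc 0)) \<le> \<eta>" using Psi_ge(1)[of 1] Psi1 by simp
  then have "\<forall>k \<le> Suc 1. D k \<le> \<eta>" using D0 D1 by (auto simp: le_Suc_eq)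
  then show ?case using Psi1 by simp
next
  case (Suc n)
  have allD: "\<And>k. k \<le> Suc n \<Longrightarrow> D k \<le> \<eta>" using Suc.IH by auto
  have qb: "0 < qhat" "qhat \<le> 1/2" using q_facts by auto
  have pw: "(1 - qhat) ^ (Suc n - 2) \<le> 1" using qb by (intro power_le_one) auto
  have P: "Psi (Suc n) \<le> \<eta> * (1 - qhat) ^ (Suc n - 2)"
  proof (cases "n = 1")
    case True
    have "Psi (Suc n) \<le> (1 - 0) * Psi n" by (rule contract_gen) (use Suc allD in auto)
    then show ?thesis using True Suc.IH by simp
  next
    case False
    then have n2: "n \<ge> 2" using Suc by simp
    have "Psi (Suc n) \<le> (1 - qhat) * Psi n" by (rule contract_gen) (use Suc allD n2 in auto)
    also have "\<dots> \<le> (1 - qhat) * (\<eta> * (1 - qhat) ^ (n - 2))" using Suc.IH qb by (intro mult_left_mono) auto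
    also have "\<dots> = \<eta> * (1 - qhat) ^ (Suc n - 2)"
    proof -
      have "Suc n - 2 = Suc (n - 2)" using n2 by simp
      then show ?thesis by (simp only: power_Suc mult_ac)
    qed
    finally show ?thesis .
  qed
  have "D (Suc (Suc n)) \<le> \<eta>"
  proof -
    have "D (Suc (Suc n)) \<le> \<eta> * (1 - qhat) ^ (Suc n - 2)" using Psi_ge(1)[of "Suc n"] P by simp
    also have "\<dots> \<le> \<eta>" using pw eta_nonneg by (simp add: mult_left_le)
    finally show ?thesis .
  qed
  then have "\<forall>k \<le> Suc (Suc n). D k \<le> \<eta>" using allD by (auto simp: le_Suc_eq)
  then show ?case using P by simp
qed

end



context setting begin

lemma allD: "D k \<le> \<eta>"
  using main[of "Suc k"] by auto

lemma Psi_bound: "n \<ge> 1 \<Longrightarrow> Psi n \<le> \<eta> * (1 - qhat) ^ (n - 2)"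
  using main by blast

lemma c1_facts: "c1 \<ge> 0" "c1\<^sup>2 = (R + norm (x 0))\<^sup>2 + \<eta>" "c1\<^sup>2 \<ge> 4 * \<eta>"
proof -
  have "(R + norm (x 0))\<^sup>2 \<ge> 0" by simp
  then have n: "(R + norm (x 0))\<^sup>2 + \<eta> \<ge> 0" using eta_nonneg by linarith
  show "c1 \<ge> 0" unfolding c1_def using n by simp
  show e: "c1\<^sup>2 = (R + norm (x 0))\<^sup>2 + \<eta>" unfolding c1_def using n by simp
  have R3: "R \<ge> 3 * sqrt \<eta>" using R infdist_nonneg[of "x 0" Xs] norm_ge_zero[of "x 0"] by linarith
  have "(3 * sqrt \<eta>)\<^sup>2 \<le> R\<^sup>2" using R3 sqrt_eta by (intro power_mono) auto
  then have "9 * \<eta> \<le> R\<^sup>2" using eta_nonneg by (simp add: power_mult_distrib)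
  moreover have "R\<^sup>2 \<le> (R + norm (x 0))\<^sup>2" using R_pos by (intro power_mono) auto
  ultimately show "c1\<^sup>2 \<ge> 4 * \<eta>" unfolding e using eta_nonneg by simp
qed

lemma pow_bound: "k \<ge> 1 \<Longrightarrow> \<eta> * (1 - qhat) ^ (k - 2) \<le> c1\<^sup>2 * (1 - qhat) ^ k"
proof -
  assume k: "k \<ge> 1"
  define r where "r = 1 - qhat"
  have r: "r \<ge> 1/2" "r \<le> 1" using q_facts unfolding r_def by auto
  show ?thesis
  proof (cases "k = 1")
    case True
    have "c1\<^sup>2 * r \<ge> 4 * \<eta> * (1/2)" using c1_facts(3) r eta_nonneg by (intro mult_mono) auto
    then show ?thesis using True eta_nonneg unfolding r_def by simp
  next
    case False
    then have k2: "k = (k - 2) + 2" using k by simp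
    have "r\<^sup>2 \<ge> (1/2)\<^sup>2" using r by (intro power_mono) auto
    then have "c1\<^sup>2 * r\<^sup>2 \<ge> 4 * \<eta> * (1/2)\<^sup>2" using c1_facts(3) eta_nonneg by (intro mult_mono) auto
    then have "c1\<^sup>2 * r\<^sup>2 \<ge> \<eta>" by (simp add: power2_eq_square)
    then have "\<eta> * r ^ (k - 2) \<le> c1\<^sup>2 * r\<^sup>2 * r ^ (k - 2)" using r by (intro mult_right_mono) auto
    also have "\<dots> = c1\<^sup>2 * r ^ k"
    proof -
      have "r ^ k = r ^ (k - 2) * r ^ 2" by (metis k2 power_add)
      then show ?thesis by (simp add: mult_ac)
    qed
    finally show ?thesis unfolding r_def .
  qed
qed

lemma DB: "D (Suc k) \<le> c1\<^sup>2 * (1 - qhat) ^ k"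
proof (cases "k = 0")
  case True
  then show ?thesis using D1 c1_facts(3) eta_nonneg by simp
next
  case False
  then have "D (Suc k) \<le> \<eta> * (1 - qhat) ^ (k - 2)" using Psi_ge(1)[of k] Psi_bound[of k] by simp
  also have "\<dots> \<le> c1\<^sup>2 * (1 - qhat) ^ k" using pow_bound[of k] False by simp
  finally show ?thesis .
qed

lemma MB: "cc * (lam k)\<^sup>2 * (norm (g (x k)))\<^sup>2 + 2 * lam k * F k \<le> c1\<^sup>2 * (1 - qhat) ^ k"
proof (cases "k = 0")
  case True
  then show ?thesis using M0 c1_facts(3) eta_nonneg by simp
next
  case False
  then have "cc * (lam k)\<^sup>2 * (norm (g (x k)))\<^sup>2 + 2 * lam k * F k \<le> \<eta> * (1 - qhat) ^ (k - 2)"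
    using Psi_ge(2)[of k] Psi_bound[of k] by simp
  also have "\<dots> \<le> c1\<^sup>2 * (1 - qhat) ^ k" using pow_bound[of k] False by simp
  finally show ?thesis .
qed

lemma lmin_LW: "min (lam 0 * LW) \<omega> = LW * lmin"
  unfolding lmin_def using LW_pos by (simp add: min_mult_distrib_left mult.commute)

lemma min_sq: "0 \<le> a \<Longrightarrow> 0 \<le> b \<Longrightarrow> min (a\<^sup>2) (b\<^sup>2) = (min a b)\<^sup>2" for a b :: real
  by (auto simp: min_def power_mono)

lemma c2_eq: "c2 = \<omega> * c1\<^sup>2 / (\<mu>W * lmin\<^sup>2)"
proof -
  have "min ((\<alpha> 0)\<^sup>2 * (\<gamma> 0)\<^sup>2 * LW\<^sup>2) (\<omega>\<^sup>2) = min ((lam 0 * LW)\<^sup>2) (\<omega>\<^sup>2)"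
    unfolding lam_def by (simp add: power_mult_distrib)
  also have "\<dots> = (LW * lmin)\<^sup>2" using lam_pos[of 0] LW_pos om by (subst min_sq) (auto simp: lmin_LW)
  finally have e: "min ((\<alpha> 0)\<^sup>2 * (\<gamma> 0)\<^sup>2 * LW\<^sup>2) (\<omega>\<^sup>2) = LW\<^sup>2 * lmin\<^sup>2" by (simp add: power_mult_distrib)
  show ?thesis unfolding c2_def e using LW_pos by simp
qed

lemma key_c3: "(2 * \<omega>\<^sup>2 * LW + (1 - \<omega>\<^sup>2) * \<mu>W) * lmin \<le> 2 * (1 - \<omega>\<^sup>2) * \<omega> * (cc * LW * lmin + 1)"
proof -
  define t where "t = LW * lmin"
  have t: "0 < t" "t \<le> \<omega>" unfolding t_def using lmin_facts LW_pos by auto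
  have om1: "1 - \<omega>\<^sup>2 > 0" using om by simp
  have mu: "\<mu>W * lmin \<le> t" unfolding t_def using mu_facts(2) lmin_facts(1) by (intro mult_right_mono) auto
  have "(2 * \<omega>\<^sup>2 * LW + (1 - \<omega>\<^sup>2) * \<mu>W) * lmin = 2 * \<omega>\<^sup>2 * t + (1 - \<omega>\<^sup>2) * (\<mu>W * lmin)"
    unfolding t_def by (simp add: algebra_simps)
  also have "\<dots> \<le> 2 * \<omega>\<^sup>2 * t + (1 - \<omega>\<^sup>2) * t" using mu om1 by (intro add_left_mono mult_left_mono) auto
  also have "\<dots> \<le> 2 * \<omega> ^ 3 * t + 2 * (1 - \<omega>\<^sup>2) * \<omega>"
  proof -
    have w3: "\<omega> ^ 3 \<le> \<omega>\<^sup>2" using om by (simp add: power_decreasing)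
    have c0: "1 + \<omega>\<^sup>2 - 2 * \<omega> ^ 3 \<ge> 0" using w3 om(4) by linarith
    have "(1 + \<omega>\<^sup>2 - 2 * \<omega> ^ 3) * t \<le> (1 + \<omega>\<^sup>2 - 2 * \<omega> ^ 3) * \<omega>" using c0 t by (intro mult_left_mono) auto
    also have "\<dots> \<le> 2 * (1 - \<omega>\<^sup>2) * \<omega>"
    proof -
      have "(1 - \<omega>)\<^sup>2 * (1 + 2 * \<omega>) \<ge> 0" using om by simp
      then have "1 + \<omega>\<^sup>2 - 2 * \<omega> ^ 3 \<le> 2 * (1 - \<omega>\<^sup>2)"
        by (simp add: power2_eq_square power3_eq_cube algebra_simps)
      then show ?thesis using om by (intro mult_right_mono) auto
    qed
    finally show ?thesis by (simp add: algebra_simps)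
  qed
  also have "\<dots> = 2 * (1 - \<omega>\<^sup>2) * \<omega> * (cc * LW * lmin + 1)"
    unfolding t_def cc_def using om1 by (simp add: field_simps power2_eq_square power3_eq_cube)
  finally show ?thesis .
qed

lemma final_k: "norm (x (Suc k) - xs) \<le> c1 * (sqrt (1 - qhat)) ^ k
            \<and> f (x k) - fstar \<le> c2 * (1 - qhat) ^ k
            \<and> norm (g (x k)) \<le> c3 * (sqrt (1 - qhat)) ^ k"
proof -
  define B where "B = c1\<^sup>2 * (1 - qhat) ^ k"
  have qb: "0 \<le> 1 - qhat" using q_facts by simp
  have B0: "B \<ge> 0" unfolding B_def using qb by simp
  have sqB: "sqrt (C\<^sup>2 * (1 - qhat) ^ k) = C * (sqrt (1 - qhat)) ^ k" if "C \<ge> 0" for C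
    using that qb by (simp add: real_sqrt_mult real_sqrt_power)
  have c1: "norm (x (Suc k) - xs) \<le> c1 * (sqrt (1 - qhat)) ^ k"
  proof -
    have "norm (x (Suc k) - xs) = sqrt (D (Suc k))" unfolding D_def by simp
    also have "\<dots> \<le> sqrt (c1\<^sup>2 * (1 - qhat) ^ k)" using DB by simp
    also have "\<dots> = c1 * (sqrt (1 - qhat)) ^ k" using sqB c1_facts(1) by simp
    finally show ?thesis .
  qed
  have xW: "x k \<in> W" "x k - (1 / LW) *\<^sub>R g (x k) \<in> W" using inW[OF allD] by auto
  have lk: "lam k \<ge> lmin" by (rule lam_ge_min) (use inW(1)[OF allD] in auto)
  have lp: "lmin > 0" using lmin_facts by simp
  have M: "cc * (lam k)\<^sup>2 * (norm (g (x k)))\<^sup>2 + 2 * lam k * F k \<le> B" unfolding B_def by (rule MB)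
  have GF: "(norm (g (x k)))\<^sup>2 \<le> 2 * LW * F k" using gradC[OF xW] unfolding F_def .
  have c2: "f (x k) - fstar \<le> c2 * (1 - qhat) ^ k"
  proof -
    have "cc * (lam k)\<^sup>2 * (norm (g (x k)))\<^sup>2 \<ge> 0" using cc_ss by simp
    then have "2 * lam k * F k \<le> B" using M by linarith
    moreover have "2 * lmin * F k \<le> 2 * lam k * F k" using lk F_nonneg[of k] by (intro mult_right_mono) auto
    ultimately have "2 * lmin * F k \<le> B" by linarith
    then have "F k \<le> B / (2 * lmin)" using lp by (subst pos_le_divide_eq) (auto simp: mult_ac)
    also have "B / (2 * lmin) \<le> c2 * (1 - qhat) ^ k"
    proof -
      have "B / (2 * lmin) = B * (1 / (2 * lmin))" by simp
      also have "\<dots> \<le> B * (\<omega> / (\<mu>W * lmin\<^sup>2))"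
      proof (rule mult_left_mono[OF _ B0])
        have "\<mu>W * lmin \<le> \<omega>" using lmin_facts by simp
        then have "1 * (\<mu>W * lmin\<^sup>2) \<le> \<omega> * (2 * lmin)" using lp om
          by (simp add: power2_eq_square)
        then show "1 / (2 * lmin) \<le> \<omega> / (\<mu>W * lmin\<^sup>2)"
          using lp mu_facts(1) by (intro div_le_div_cross) auto
      qed
      also have "\<dots> = c2 * (1 - qhat) ^ k" unfolding B_def c2_eq by simp
      finally show ?thesis .
    qed
    finally show ?thesis unfolding F_def .
  qed
  have c3: "norm (g (x k)) \<le> c3 * (sqrt (1 - qhat)) ^ k"
  proof -
    define G where "G = (norm (g (x k)))\<^sup>2"
    define den where "den = 2 * \<omega>\<^sup>2 * LW + (1 - \<omega>\<^sup>2) * \<mu>W"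
    define K where "K = 2 * (1 - \<omega>\<^sup>2) * \<omega> * LW / (den * lmin\<^sup>2)"
    have om1: "1 - \<omega>\<^sup>2 > 0" using om by simp
    have den: "den > 0" unfolding den_def using om1 om LW_pos mu_facts(1) by (intro add_pos_pos) auto
    have G0: "G \<ge> 0" unfolding G_def by simp
    have a: "min (\<alpha> 0 * \<gamma> 0 * LW) \<omega> = LW * lmin" using lmin_LW unfolding lam_def by simp
    have n1: "2 * c1\<^sup>2 * (1 - \<omega>\<^sup>2) * \<omega> * LW ^ 3 \<ge> 0" using om1 om LW_pos by simp
    have c30: "c3 \<ge> 0" unfolding c3_def a den_def[symmetric]
      using n1 den LW_pos lp by (intro divide_nonneg_pos) auto
    have c3sq: "c3\<^sup>2 = c1\<^sup>2 * K"
    proof -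
      have "c3\<^sup>2 = (2 * c1\<^sup>2 * (1 - \<omega>\<^sup>2) * \<omega> * LW ^ 3) / (den * (LW * lmin)\<^sup>2)"
        unfolding c3_def a den_def[symmetric] using n1 den by (simp add: power_divide power_mult_distrib)
      also have "\<dots> = c1\<^sup>2 * K" unfolding K_def using LW_pos lp den
        by (simp add: field_simps power2_eq_square power3_eq_cube)
      finally show ?thesis .
    qed
    define Q where "Q = cc * lmin\<^sup>2 + lmin / LW"
    have Qp: "Q > 0" unfolding Q_def using cc_ss lp LW_pos by (intro add_nonneg_pos) auto
    have GQ: "G * Q \<le> B"
    proof -
      have "cc * lmin\<^sup>2 \<le> cc * (lam k)\<^sup>2" using lk lp cc_ss by (intro mult_left_mono power_mono) auto
      moreover have "lmin / LW \<le> lam k / LW" using lk LW_pos by (simp add: divide_right_mono)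
      ultimately have "Q \<le> cc * (lam k)\<^sup>2 + lam k / LW" unfolding Q_def by simp
      then have "G * Q \<le> G * (cc * (lam k)\<^sup>2 + lam k / LW)" using G0 by (intro mult_left_mono) auto
      also have "\<dots> \<le> cc * (lam k)\<^sup>2 * G + 2 * lam k * F k"
      proof -
        have "lam k * G \<le> lam k * (2 * LW * F k)" using GF lam_pos[of k] unfolding G_def by (intro mult_left_mono) auto
        then have "G * (lam k / LW) \<le> 2 * lam k * F k" using LW_pos by (simp add: field_simps)
        then show ?thesis by (simp add: algebra_simps)
      qed
      also have "\<dots> \<le> B" using M unfolding G_def by simp
      finally show ?thesis .
    qed
    have QK: "1 / Q \<le> K"
    proof -
      have e: "Q = lmin * (cc * LW * lmin + 1) / LW" unfolding Q_def using LW_pos by (simp add: field_simps power2_eq_square)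
      have p1: "cc * LW * lmin + 1 > 0" using cc_ss LW_pos lp by (intro add_nonneg_pos) auto
      have "1 / Q = LW / (lmin * (cc * LW * lmin + 1))" unfolding e by simp
      also have "\<dots> \<le> 2 * (1 - \<omega>\<^sup>2) * \<omega> * LW / (den * lmin\<^sup>2)"
      proof (rule div_le_div_cross)
        show "0 < lmin * (cc * LW * lmin + 1)" using lp p1 by simp
        show "0 < den * lmin\<^sup>2" using den lp by simp
        have "den * lmin \<le> 2 * (1 - \<omega>\<^sup>2) * \<omega> * (cc * LW * lmin + 1)" using key_c3 unfolding den_def .
        then have "(LW * lmin) * (den * lmin) \<le> (LW * lmin) * (2 * (1 - \<omega>\<^sup>2) * \<omega> * (cc * LW * lmin + 1))"
          using LW_pos lp by (intro mult_left_mono) auto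
        then show "LW * (den * lmin\<^sup>2) \<le> 2 * (1 - \<omega>\<^sup>2) * \<omega> * LW * (lmin * (cc * LW * lmin + 1))"
          by (simp add: power2_eq_square mult_ac)
      qed
      finally show ?thesis unfolding K_def .
    qed
    have "G \<le> B / Q" using GQ Qp by (simp add: le_divide_eq)
    also have "\<dots> = B * (1 / Q)" by simp
    also have "\<dots> \<le> B * K" using QK B0 by (intro mult_left_mono) auto
    also have "\<dots> = c3\<^sup>2 * (1 - qhat) ^ k" unfolding B_def c3sq by simp
    finally have "G \<le> c3\<^sup>2 * (1 - qhat) ^ k" .
    then have "sqrt G \<le> sqrt (c3\<^sup>2 * (1 - qhat) ^ k)" by simp
    also have "\<dots> = c3 * (sqrt (1 - qhat)) ^ k" using sqB c30 by simp
    finally show ?thesis unfolding G_def by simp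
  qed
  show ?thesis using c1 c2 c3 by simp
qed

end

theorem theorem4p6:
  fixes f :: "'a::euclidean_space \<Rightarrow> real" and g :: "'a \<Rightarrow> 'a"
    and x :: "nat \<Rightarrow> 'a" and \<alpha> \<gamma> \<theta> L :: "nat \<Rightarrow> real"
    and \<tau> \<omega> \<gamma>min \<gamma>max :: real
    and Xs :: "'a set" and fstar \<eta> R LW \<mu>W m qhat c1 c2 c3 :: real and xs :: 'a
  assumes conv: "convex_on UNIV f"
    and grad: "\<And>z. GDERIV f z :> g z"
    and grad_cont: "continuous_on UNIV g"
    and lsc: "locally_strongly_convex f g"
    and llip: "locally_lipschitz g"
    and Xs_def: "Xs = {z. \<forall>y. f z \<le> f y}"
    and Xs_ne: "Xs \<noteq> {}"
    and fstar_def: "fstar = (INF y. f y)"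
    and \<alpha>0: "\<alpha> 0 > 0" and \<theta>0: "\<theta> 0 > 0" and \<tau>: "\<tau> > 1"
    and \<omega>: "0 < \<omega>" "\<omega> \<le> 1 / sqrt 2"
    and \<gamma>bounds: "0 < \<gamma>min" "\<gamma>min \<le> \<gamma>max" "\<And>k. \<gamma> k \<in> {\<gamma>min..\<gamma>max}"
    and iter: "\<And>k. x (Suc k) = x k - (\<alpha> k * \<gamma> k) *\<^sub>R g (x k)"
    and L_def: "\<And>k. k \<ge> 1 \<Longrightarrow> L k = norm (g (x k) - g (x (k - 1))) / norm (x k - x (k - 1))"
    and \<alpha>_def: "\<And>k. k \<ge> 1 \<Longrightarrow> \<alpha> k =
        (if L k = 0
         then \<alpha> (k - 1) * \<gamma> (k - 1) / \<gamma> k * sqrt (2 * (1 - \<omega>\<^sup>2) + \<theta> (k - 1) / \<tau>)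
         else min (\<alpha> (k - 1) * \<gamma> (k - 1) / \<gamma> k * sqrt (2 * (1 - \<omega>\<^sup>2) + \<theta> (k - 1) / \<tau>))
                  (\<omega> / (\<gamma> k * L k)))"
    and \<theta>_def: "\<And>k. k \<ge> 1 \<Longrightarrow> \<theta> k = \<alpha> k * \<gamma> k / (\<alpha> (k - 1) * \<gamma> (k - 1))"
    and \<eta>_def: "\<eta> = (infdist (x 0) Xs)\<^sup>2 + 2 * (\<alpha> 0)\<^sup>2 * (\<gamma> 0)\<^sup>2 * (norm (g (x 0)))\<^sup>2
                   + 2 * \<alpha> 0 * \<gamma> 0 * \<theta> 0 * (f (x 0) - fstar)"
    and R: "R > 3 * sqrt \<eta> + infdist (x 0) Xs + norm (x 0)"
    and LW_pos: "LW > 0"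
    and LW_lip: "\<forall>u\<in>cball 0 R. \<forall>v\<in>cball 0 R. norm (g u - g v) \<le> LW * norm (u - v)"
    and \<mu>W_def: "\<mu>W = Inf {inner (g v - g u) (v - u) / (norm (v - u))\<^sup>2 | u v.
                        u \<in> cball 0 R \<and> v \<in> cball 0 R \<and> u \<noteq> v}"
    and m_def: "m = min (\<alpha> 0 * \<gamma> 0 * \<mu>W / \<omega>) (\<mu>W / LW)"
    and qhat_def: "qhat = min (\<mu>W / 2 * min (\<alpha> 0 * \<gamma> 0) (\<omega> / LW))
                     (min (\<mu>W * (1 - \<omega>\<^sup>2) / (2 * \<omega> ^ 3 * LW + \<mu>W * (1 - \<omega>\<^sup>2)))
                          ((\<tau> - 1) * m / (\<tau> * (2 * (1 - \<omega>\<^sup>2) + m))))"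
    and xs: "xs \<in> Xs"
    and c1_def: "c1 = sqrt ((R + norm (x 0))\<^sup>2 + \<eta>)"
    and c2_def: "c2 = \<omega> * LW\<^sup>2 * c1\<^sup>2 / (\<mu>W * min ((\<alpha> 0)\<^sup>2 * (\<gamma> 0)\<^sup>2 * LW\<^sup>2) (\<omega>\<^sup>2))"
    and c3_def: "c3 = sqrt (2 * c1\<^sup>2 * (1 - \<omega>\<^sup>2) * \<omega> * LW ^ 3)
                    / (sqrt (2 * \<omega>\<^sup>2 * LW + (1 - \<omega>\<^sup>2) * \<mu>W) * min (\<alpha> 0 * \<gamma> 0 * LW) \<omega>)"
  shows "\<forall>k. norm (x (Suc k) - xs) \<le> c1 * (sqrt (1 - qhat)) ^ k
            \<and> f (x k) - fstar \<le> c2 * (1 - qhat) ^ k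
            \<and> norm (g (x k)) \<le> c3 * (sqrt (1 - qhat)) ^ k"
proof -
  interpret setting f g x \<alpha> \<gamma> \<theta> L \<tau> \<omega> \<gamma>min \<gamma>max Xs fstar \<eta> R LW \<mu>W m qhat c1 c2 c3 xs
    by unfold_locales (fact assms)+
  show ?thesis using final_k by blast
qed

end
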